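(* Let $\varphi\in(\tfrac12,1)$ be irrational and $1<\alpha\le2$. Let $\mathcal{S}=\bigcup_{n\in\mathbb{N},\,n\ge1,\ \varphi-1/n>0}\mathcal{S}_{\varphi-\frac1n}$, where $\mathcal{S}_\psi$ denotes the set of Sturmian words generated by $\psi$. If $X$ is a Sturmian word generated by $\varphi$, then $X$ is stable with respect to $\mathcal{S}$ for the Hamiltonian $H_\alpha$; that is, for every finite set $P$ of patterns there exists $\lambda>0$ such that for every $(\lambda,P)$-perturbation $\widetilde H$ of $H_\alpha$ we have $\rho_{\widetilde H}(X)\le\rho_{\widetilde H}(W)$ for all $W\in\mathcal{S}$.
   Context: Circle $=\mathbb{R}/\mathbb{Z}$. For irrational $\psi$, $X\in\{0,1\}^{\mathbb{Z}}$ is a Sturmian word generated by $\psi$ if there are $x\in\mathbb{R}/\mathbb{Z}$ and $P_0\in\{[0,\psi),(0,\psi]\}$ with $X(n)=0$ if $x+n\psi\in P_0$ and $X(n)=1$ otherwise. Forbidden distances: $F=\{k\in\mathbb{N}: k\varphi \bmod 1\in[1-\varphi,\varphi]\}$. Fix $m\in\mathbb{N}$ such that the sequences in $\{0,1\}^{\mathbb{Z}}$ containing no $m$ consecutive $0$'s and no two $1$'s at a distance in $F$ are exactly the Sturmian words generated by $\varphi$ (such $m$ exists). A pattern is a configuration in $\{0,1\}^A$ on a finite set $A\subset\mathbb{Z}$, up to translation. A Hamiltonian is given by energies $\Phi$ on patterns; for a finite segment $w$, $H(w)$ is the sum of $\Phi(p)$ over all occurrences of patterns $p$ in $w$. $H_\alpha$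 assigns energy $1/n^\alpha$ to the pattern of two $1$'s at distance $n$ for each $n\in F$, energy $1$ to the pattern of $m$ consecutive $0$'s, and $0$ to all other patterns. Energy density: $\rho_H(X)=\liminf_{k\to\infty}\frac{H(X([-k,k]))}{2k+1}$. For a finite set of patterns $P$ and $\lambda>0$, $\widetilde H$ (energies $\widetilde\Phi$) is a $(\lambda,P)$-perturbation of $H$ (energies $\Phi$) if $|\Phi(p)-\widetilde\Phi(p)|<\lambda$ for $p\in P$ and $\Phi(q)=\widetilde\Phi(q)$ for $q\notin P$. *)

theory Defs
  imports "HOL-Analysis.Analysis" "HOL-Library.Liminf_Limsup"
begin

text \<open>Bi-infinite 0/1 sequences are modelled as functions int => nat (values 0 and 1).
A pattern (configuration on a finite set A of integers, up to translation) is represented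
in normal form as a partial map int => nat option whose domain is the translate of A
with minimum 0.\<close>

type_synonym pattern = "int \<Rightarrow> nat option"

definition sturmian :: "real \<Rightarrow> (int \<Rightarrow> nat) \<Rightarrow> bool" where
  "sturmian \<psi> X \<longleftrightarrow> (\<exists>x::real.
      (\<forall>n. X n = (if frac (x + of_int n * \<psi>) \<in> {0..<\<psi>} then 0 else 1)) \<or>
      (\<forall>n. X n = (if frac (x + of_int n * \<psi>) \<in> {0<..\<psi>} then 0 else 1)))"

definition forbidden :: "real \<Rightarrow> nat set" where
  "forbidden \<phi> = {k. k \<ge> 1 \<and> frac (real k * \<phi>) \<in> {1 - \<phi> .. \<phi>}}"

definition no_m_zeros :: "nat \<Rightarrow> (int \<Rightarrow> nat) \<Rightarrow> bool" where
  "no_m_zeros m X \<longleftrightarrow> \<not> (\<exists>t. \<forall>i<m. X (t + int i) = 0)"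

definition no_forbidden_ones :: "real \<Rightarrow> (int \<Rightarrow> nat) \<Rightarrow> bool" where
  "no_forbidden_ones \<phi> X \<longleftrightarrow> (\<forall>s. \<forall>n\<in>forbidden \<phi>. \<not> (X s = 1 \<and> X (s + int n) = 1))"

definition pattern_of :: "(int \<Rightarrow> nat) \<Rightarrow> int set \<Rightarrow> pattern" where
  "pattern_of X A = (\<lambda>i. if i + Min A \<in> A then Some (X (i + Min A)) else None)"

definition two_ones :: "nat \<Rightarrow> pattern" where
  "two_ones n = (\<lambda>i. if i = 0 \<or> i = int n then Some 1 else None)"

definition zeros_pat :: "nat \<Rightarrow> pattern" where
  "zeros_pat m = (\<lambda>i. if 0 \<le> i \<and> i < int m then Some 0 else None)"

definition H_alpha :: "real \<Rightarrow> nat \<Rightarrow> real \<Rightarrow> pattern \<Rightarrow> real" where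
  "H_alpha \<phi> m \<alpha> p =
     (if p = zeros_pat m then 1
      else if (\<exists>n\<in>forbidden \<phi>. p = two_ones n)
        then 1 / (real (THE n. n \<in> forbidden \<phi> \<and> p = two_ones n)) powr \<alpha>
      else 0)"

text \<open>An occurrence is determined by its (nonempty) support A inside the segment, and the
pattern occurring there is pattern_of X A.\<close>
definition seg_energy :: "(pattern \<Rightarrow> real) \<Rightarrow> (int \<Rightarrow> nat) \<Rightarrow> nat \<Rightarrow> real" where
  "seg_energy \<Phi> X k = (\<Sum>A\<in>{A. A \<subseteq> {- int k .. int k} \<and> A \<noteq> {}}. \<Phi> (pattern_of X A))"

definition energy_density :: "(pattern \<Rightarrow> real) \<Rightarrow> (int \<Rightarrow> nat) \<Rightarrow> ereal" where
  "energy_density \<Phi> X =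
     Liminf sequentially (\<lambda>k. ereal (seg_energy \<Phi> X k / (2 * real k + 1)))"

definition perturbation :: "real \<Rightarrow> pattern set \<Rightarrow> (pattern \<Rightarrow> real) \<Rightarrow> (pattern \<Rightarrow> real) \<Rightarrow> bool" where
  "perturbation lam P \<Phi> \<Phi>' \<longleftrightarrow>
     (\<forall>p\<in>P. \<bar>\<Phi> p - \<Phi>' p\<bar> < lam) \<and> (\<forall>q. q \<notin> P \<longrightarrow> \<Phi> q = \<Phi>' q)"

end

theory Submission
  imports Defs
begin


lemma real_lt_iff_nat_ceiling: "real j < r \<longleftrightarrow> j < nat \<lceil>r\<rceil>"
proof -
  have "real j < r \<longleftrightarrow> int j < \<lceil>r\<rceil>" using less_ceiling_iff[of "int j" r] by simp
  also have "\<dots> \<longleftrightarrow> j < nat \<lceil>r\<rceil>" by (simp add: zless_nat_eq_int_zless)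
  finally show ?thesis .
qed

lemma card_lt_eq: "card {j. j < J \<and> real j < r} = min J (nat \<lceil>r\<rceil>)"
proof -
  have "{j. j < J \<and> real j < r} = {..<min J (nat \<lceil>r\<rceil>)}"
    by (auto simp: real_lt_iff_nat_ceiling)
  then show ?thesis by simp
qed

lemma card_lt_bounds:
  fixes r :: real and J :: nat
  shows "min (real J) r \<le> real (card {j. j < J \<and> real j < r})"
    and "real (card {j. j < J \<and> real j < r}) \<le> min (real J) (max 0 (r + 1))"
proof -
  have c: "real (card {j. j < J \<and> real j < r}) = min (real J) (real (nat \<lceil>r\<rceil>))"
    by (simp add: card_lt_eq)
  have "r \<le> real (nat \<lceil>r\<rceil>)" 
  proof (cases "\<lceil>r\<rceil> \<le> 0")
    case True then show ?thesis using le_of_int_ceiling[of r] by simp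
  next
    case False then show ?thesis using le_of_int_ceiling[of r] by simp
  qed
  moreover have "real (nat \<lceil>r\<rceil>) \<le> max 0 (r + 1)"
  proof (cases "\<lceil>r\<rceil> \<le> 0")
    case True then show ?thesis by simp
  next
    case False
    then have "real (nat \<lceil>r\<rceil>) = of_int \<lceil>r\<rceil>" by simp
    also have "\<dots> \<le> r + 1" using ceiling_correct[of r] by linarith
    finally show ?thesis by simp
  qed
  ultimately show "min (real J) r \<le> real (card {j. j < J \<and> real j < r})"
    and "real (card {j. j < J \<and> real j < r}) \<le> min (real J) (max 0 (r + 1))"
    unfolding c by linarith+
qed

lemma AP_count_lt:
  fixes \<eta> s b :: real and J :: nat
  assumes eta: "\<eta> > 0" and J1: "real J * \<eta> \<le> 1" and J2: "real J * \<eta> > 1 - \<eta>"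
    and s: "0 \<le> s" "s < 1" and b: "0 \<le> b" "b \<le> 1"
  shows "\<bar>real (card {j. j < J \<and> frac (s + real j * \<eta>) < b}) - b * real J\<bar> \<le> 4"
proof -
  define N where "N y = card {j. j < J \<and> real j < (y - s) / \<eta>}" for y
  have lt_iff: "s + real j * \<eta> < y \<longleftrightarrow> real j < (y - s) / \<eta>" for j y
    using eta by (simp add: field_simps)
  have fr: "frac (s + real j * \<eta>) < b \<longleftrightarrow> (s + real j * \<eta> < b \<or> (1 \<le> s + real j * \<eta> \<and> s + real j * \<eta> < 1 + b))"
    if "j < J" for j
  proof -
    have "real j * \<eta> < real J * \<eta>" using that eta by simp
    hence lt2: "s + real j * \<eta> < 2" using J1 s by linarith
    have ge0: "0 \<le> s + real j * \<eta>" using s eta by simp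
    show ?thesis
    proof (cases "s + real j * \<eta> < 1")
      case True
      then have "frac (s + real j * \<eta>) = s + real j * \<eta>" using ge0 by (simp add: frac_eq)
      then show ?thesis using True by auto
    next
      case False
      then have "frac (s + real j * \<eta>) = s + real j * \<eta> - 1"
        using lt2 by (subst frac_unique_iff) auto
      then show ?thesis using False by auto
    qed
  qed
  define A where "A = {j. j < J \<and> real j < (b - s) / \<eta>}"
  define B where "B = {j. j < J \<and> real j < (1 + b - s) / \<eta>}"
  define C where "C = {j. j < J \<and> real j < (1 - s) / \<eta>}"
  have fr2: "frac (s + real j * \<eta>) < b \<longleftrightarrow> (real j < (b - s) / \<eta> \<or> (\<not> real j < (1 - s) / \<eta> \<and> real j < (1 + b - s) / \<eta>))"
    if "j < J" for j
  proof -
    have i1: "s + real j * \<eta> < b \<longleftrightarrow> real j < (b - s) / \<eta>" by (rule lt_iff)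
    have i2: "1 \<le> s + real j * \<eta> \<longleftrightarrow> \<not> real j < (1 - s) / \<eta>" using lt_iff[of j 1] by (meson not_less)
    have i3: "s + real j * \<eta> < 1 + b \<longleftrightarrow> real j < (1 + b - s) / \<eta>" by (rule lt_iff)
    show ?thesis by (simp only: fr[OF that] i1 i2 i3)
  qed
  have "{j. j < J \<and> frac (s + real j * \<eta>) < b} = A \<union> (B - C)"
    unfolding A_def B_def C_def using fr2 by auto
  moreover have "A \<inter> (B - C) = {}"
  proof -
    have "(b - s) / \<eta> \<le> (1 - s) / \<eta>" using b eta by (simp add: divide_right_mono)
    then show ?thesis unfolding A_def B_def C_def by auto
  qed
  moreover have "C \<subseteq> B"
  proof -
    have "(1 - s) / \<eta> \<le> (1 + b - s) / \<eta>" using b eta by (simp add: divide_right_mono)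
    then show ?thesis unfolding B_def C_def by auto
  qed
  moreover have fin: "finite A" "finite B" "finite C" unfolding A_def B_def C_def by auto
  ultimately have card: "card {j. j < J \<and> frac (s + real j * \<eta>) < b} = card A + (card B - card C)"
    by (simp add: card_Un_disjoint card_Diff_subset)
  have cBC: "card C \<le> card B" using \<open>C \<subseteq> B\<close> fin by (simp add: card_mono)
  define t where "t = 1 / \<eta>"
  have t: "t > 0" using eta by (simp add: t_def)
  define BB where "BB = b * t"
  define SS where "SS = s * t"
  have e1: "(b - s) / \<eta> = BB - SS" and e2: "(1 + b - s) / \<eta> = t + BB - SS" and e3: "(1 - s) / \<eta> = t - SS"
    using eta by (simp_all add: BB_def SS_def t_def diff_divide_distrib add_divide_distrib)
  have Jt: "real J \<le> t" "t - 1 < real J"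
    using J1 J2 eta by (simp_all add: t_def field_simps)
  have SS: "0 \<le> SS" "SS < t" using s t by (simp_all add: SS_def)
  have BB: "0 \<le> BB" "BB \<le> t" using b t by (simp_all add: BB_def)
  have bJ: "BB - 1 \<le> b * real J" "b * real J \<le> BB"
  proof -
    have "b * real J \<le> b * t" using Jt b by (simp add: mult_left_mono)
    then show "b * real J \<le> BB" by (simp add: BB_def)
    have "b * (t - 1) \<le> b * real J" using Jt b by (simp add: mult_left_mono)
    moreover have "b * (t - 1) \<ge> BB - 1" using b by (simp add: BB_def algebra_simps)
    ultimately show "BB - 1 \<le> b * real J" by linarith
  qed
  note bA = card_lt_bounds[of J "BB - SS"] and bB = card_lt_bounds[of J "t + BB - SS"]
    and bC = card_lt_bounds[of J "t - SS"]
  have A0: "real (card A) \<le> real J" "0 \<le> real (card A)" "real (card B) \<le> real J" "real (card C) \<le> real J"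
    unfolding A_def B_def C_def by (simp_all add: card_lt_eq)
  have Alo: "real (card A) = real J \<or> BB - SS \<le> real (card A)"
    using bA(1) A0 unfolding A_def e1 by (auto simp: min_def split: if_splits)
  have Blo: "real (card B) = real J \<or> t + BB - SS \<le> real (card B)"
    using bB(1) A0 unfolding B_def e2 by (auto simp: min_def split: if_splits)
  have Clo: "real (card C) = real J \<or> t - SS \<le> real (card C)"
    using bC(1) A0 unfolding C_def e3 by (auto simp: min_def split: if_splits)
  have Aup: "real (card A) \<le> 0 \<or> real (card A) \<le> BB - SS + 1"
    using bA(2) unfolding A_def e1 by (auto simp: min_def max_def split: if_splits)
  have Bup: "real (card B) \<le> t + BB - SS + 1"
    using bB(2) SS BB unfolding B_def e2 by (auto simp: min_def max_def split: if_splits)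
  have Cup: "real (card C) \<le> t - SS + 1"
    using bC(2) SS unfolding C_def e3 by (auto simp: min_def max_def split: if_splits)
  have BC: "real (card C) \<le> real (card B)" using cBC by simp
  have eq: "real (card {j. j < J \<and> frac (s + real j * \<eta>) < b}) = real (card A) + real (card B) - real (card C)"
    using card cBC by simp
  have up: "real (card A) + real (card B) - real (card C) \<le> b * real J + 4"
    using Clo Aup A0 Bup bJ Jt SS BB by (elim disjE) linarith+
  have lo: "real (card A) + real (card B) - real (card C) \<ge> b * real J - 4"
    using Alo Blo A0 Cup BC bJ Jt SS BB by (elim disjE) linarith+
  show ?thesis unfolding eq using up lo by linarith
qed

lemma AP_count:
  fixes \<eta> s a b :: real and J :: nat
  assumes eta: "\<eta> > 0" and J1: "real J * \<eta> \<le> 1" and J2: "real J * \<eta> > 1 - \<eta>"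
    and ab: "0 \<le> a" "a \<le> b" "b \<le> 1"
  shows "\<bar>real (card {j. j < J \<and> frac (s + real j * \<eta>) \<in> {a..<b}}) - (b - a) * real J\<bar> \<le> 8"
proof -
  have fs: "frac (s + real j * \<eta>) = frac (frac s + real j * \<eta>)" for j
  proof -
    have "s + real j * \<eta> = (frac s + real j * \<eta>) + of_int \<lfloor>s\<rfloor>" by (simp add: frac_def)
    then show ?thesis by (metis frac_add_of_int_right)
  qed
  have s: "0 \<le> frac s" "frac s < 1" by (auto simp: frac_lt_1)
  define Sb where "Sb = {j. j < J \<and> frac (frac s + real j * \<eta>) < b}"
  define Sa where "Sa = {j. j < J \<and> frac (frac s + real j * \<eta>) < a}"
  have eqs: "{j. j < J \<and> frac (s + real j * \<eta>) \<in> {a..<b}} = Sb - Sa"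
    unfolding Sa_def Sb_def by (auto simp: fs[symmetric])
  have sub: "Sa \<subseteq> Sb" using ab unfolding Sa_def Sb_def by auto
  have fin: "finite Sb" unfolding Sb_def by auto
  have cm: "card Sa \<le> card Sb" using sub fin by (rule card_mono[rotated])
  have c: "real (card {j. j < J \<and> frac (s + real j * \<eta>) \<in> {a..<b}}) = real (card Sb) - real (card Sa)"
    unfolding eqs using card_Diff_subset[OF finite_subset[OF sub fin] sub] cm by (simp add: of_nat_diff)
  have 1: "\<bar>real (card Sb) - b * real J\<bar> \<le> 4"
    unfolding Sb_def by (rule AP_count_lt[OF eta J1 J2 s]) (use ab in auto)
  have 2: "\<bar>real (card Sa) - a * real J\<bar> \<le> 4"
    unfolding Sa_def by (rule AP_count_lt[OF eta J1 J2 s]) (use ab in auto)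
  have e: "(b - a) * real J = b * real J - a * real J" by (simp add: algebra_simps)
  show ?thesis unfolding c e using 1 2 unfolding abs_le_iff by linarith
qed


definition ind :: "bool \<Rightarrow> nat" where "ind P = (if P then 1 else 0)"

definition cnt :: "real \<Rightarrow> real \<Rightarrow> real \<Rightarrow> real \<Rightarrow> nat \<Rightarrow> nat" where
  "cnt \<beta> x a b M = (\<Sum>t<M. ind (frac (x + real t * \<beta>) \<in> {a..<b}))"

lemma sum_split_nat: "(\<Sum>t<M1 + M2. f t) = (\<Sum>t<M1. f t) + (\<Sum>u<M2. f (M1 + u))"
  for f :: "nat \<Rightarrow> 'a::comm_monoid_add"
  by (induction M2) (simp_all add: add.assoc)

lemma sum_block_nat: "(\<Sum>t<J * q. f t) = (\<Sum>j<J. \<Sum>r<q. f (j * q + r))"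
  for f :: "nat \<Rightarrow> 'a::comm_monoid_add"
proof (induction J)
  case 0 then show ?case by simp
next
  case (Suc J)
  have "(\<Sum>t<Suc J * q. f t) = (\<Sum>t<J * q + q. f t)" by (simp add: add.commute)
  also have "\<dots> = (\<Sum>t<J * q. f t) + (\<Sum>r<q. f (J * q + r))" by (rule sum_split_nat)
  finally show ?case using Suc by simp
qed

lemma ind_le1: "ind P \<le> 1" by (simp add: ind_def)

lemma card_as_ind: "card {j. j < (J::nat) \<and> P j} = (\<Sum>j<J. ind (P j))"
proof -
  have "card {j. j < J \<and> P j} = card {j \<in> {..<J}. P j}" by (rule arg_cong[where f=card]) auto
  also have "\<dots> = (\<Sum>j\<in>{j \<in> {..<J}. P j}. 1)" by simp
  also have "\<dots> = (\<Sum>j<J. if P j then 1 else 0)" by (rule sum.inter_filter) simp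
  finally show ?thesis by (simp add: ind_def)
qed

lemma cnt_le: "cnt \<beta> x a b M \<le> M"
proof -
  have "cnt \<beta> x a b M \<le> (\<Sum>t<M. 1)" unfolding cnt_def by (rule sum_mono) (rule ind_le1)
  then show ?thesis by simp
qed

lemma cnt_add: "cnt \<beta> x a b (M1 + M2) = cnt \<beta> x a b M1 + cnt \<beta> (x + real M1 * \<beta>) a b M2"
  unfolding cnt_def sum_split_nat by (simp add: algebra_simps)

lemma cnt_block:
  fixes \<beta> x a b \<eta> :: real and q J :: nat
  assumes q: "q \<ge> 1" and eta: "frac (real q * \<beta>) = \<eta>" "\<eta> > 0"
    and J1: "real J * \<eta> \<le> 1" and J2: "real J * \<eta> > 1 - \<eta>"
    and ab: "0 \<le> a" "a \<le> b" "b \<le> 1"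
  shows "\<bar>real (cnt \<beta> x a b (J * q)) - (b - a) * real (J * q)\<bar> \<le> 8 * real q"
proof -
  have "cnt \<beta> x a b (J * q) = (\<Sum>j<J. \<Sum>r<q. ind (frac (x + real (j * q + r) * \<beta>) \<in> {a..<b}))"
    unfolding cnt_def by (rule sum_block_nat)
  also have "\<dots> = (\<Sum>r<q. \<Sum>j<J. ind (frac (x + real (j * q + r) * \<beta>) \<in> {a..<b}))"
    by (rule sum.swap)
  also have "\<dots> = (\<Sum>r<q. card {j. j < J \<and> frac ((x + real r * \<beta>) + real j * \<eta>) \<in> {a..<b}})"
  proof (rule sum.cong[OF refl], unfold card_as_ind, rule sum.cong[OF refl])
    fix r j
    have h: "real q * \<beta> = \<eta> + of_int \<lfloor>real q * \<beta>\<rfloor>" using eta(1) by (simp add: frac_def)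
    have "x + real (j * q + r) * \<beta> = (x + real r * \<beta>) + real j * (real q * \<beta>)" by (simp add: algebra_simps)
    also have "\<dots> = (x + real r * \<beta>) + real j * \<eta> + of_int (int j * \<lfloor>real q * \<beta>\<rfloor>)"
      by (subst h) (simp add: algebra_simps)
    finally have "x + real (j * q + r) * \<beta> = (x + real r * \<beta>) + real j * \<eta> + of_int (int j * \<lfloor>real q * \<beta>\<rfloor>)" .
    then show "ind (frac (x + real (j * q + r) * \<beta>) \<in> {a..<b}) = ind (frac ((x + real r * \<beta>) + real j * \<eta>) \<in> {a..<b})"
      by (metis frac_add_of_int_right)
  qed
  finally have c: "real (cnt \<beta> x a b (J * q)) = (\<Sum>r<q. real (card {j. j < J \<and> frac ((x + real r * \<beta>) + real j * \<eta>) \<in> {a..<b}}))"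
    by simp
  have "\<bar>(\<Sum>r<q. real (card {j. j < J \<and> frac ((x + real r * \<beta>) + real j * \<eta>) \<in> {a..<b}})) - (\<Sum>r<q. (b - a) * real J)\<bar>
      \<le> (\<Sum>r<q. 8)"
    unfolding sum_subtractf[symmetric]
    by (rule order_trans[OF sum_abs sum_mono]) (rule AP_count[OF eta(2) J1 J2 ab])
  then show ?thesis unfolding c by (simp add: algebra_simps)
qed

lemma cnt_multi_block:
  fixes \<beta> a b :: real and L :: nat and E :: real
  assumes blk: "\<And>x. \<bar>real (cnt \<beta> x a b L) - (b - a) * real L\<bar> \<le> E"
  shows "\<bar>real (cnt \<beta> x a b (Q * L)) - (b - a) * real (Q * L)\<bar> \<le> real Q * E"
proof (induction Q arbitrary: x)
  case 0 then show ?case by (simp add: cnt_def)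
next
  case (Suc Q)
  have e: "cnt \<beta> x a b (Suc Q * L) = cnt \<beta> x a b (Q * L) + cnt \<beta> (x + real (Q * L) * \<beta>) a b L"
  proof -
    have "Suc Q * L = Q * L + L" by simp
    then show ?thesis by (simp only: cnt_add)
  qed
  have 1: "\<bar>real (cnt \<beta> x a b (Q * L)) - (b - a) * real (Q * L)\<bar> \<le> real Q * E" by (rule Suc.IH)
  have 2: "\<bar>real (cnt \<beta> (x + real (Q * L) * \<beta>) a b L) - (b - a) * real L\<bar> \<le> E" by (rule blk)
  have 3: "(b - a) * real (Suc Q * L) = (b - a) * real (Q * L) + (b - a) * real L" by (simp add: algebra_simps)
  show ?case using 1 2 unfolding e 3 of_nat_add abs_le_iff by (simp add: algebra_simps)
qed

lemma equidist_unif: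
  fixes \<beta> a b \<epsilon> :: real
  assumes irr: "\<beta> \<notin> \<rat>" and ab: "0 \<le> a" "a \<le> b" "b \<le> 1" and eps: "\<epsilon> > 0"
  shows "\<exists>M0. \<forall>M\<ge>M0. \<forall>x. \<bar>real (cnt \<beta> x a b M) - (b - a) * real M\<bar> \<le> \<epsilon> * real M"
proof -
  define \<delta> where "\<delta> = min 1 (1 / (16 / \<epsilon> + 1))"
  have "16 / \<epsilon> > 0" using eps by simp
  hence pos: "16 / \<epsilon> + 1 > 0" by linarith
  have \<delta>: "\<delta> > 0" "\<delta> \<le> 1" using pos by (auto simp: \<delta>_def)
  obtain q where q: "q > 0" "\<bar>frac (real q * \<beta>) - \<delta> / 2\<bar> < \<delta> / 2"
    using Kronecker_approx_1_explicit[OF irr, of "\<delta>/2" "\<delta>/2"] \<delta> by auto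
  define \<eta> where "\<eta> = frac (real q * \<beta>)"
  have \<eta>: "\<eta> > 0" "\<eta> < \<delta>" using q(2) unfolding \<eta>_def abs_less_iff by linarith+
  define J where "J = nat \<lfloor>1 / \<eta>\<rfloor>"
  have inv: "1 / \<eta> > 16 / \<epsilon> + 1"
  proof -
    have "\<eta> < 1 / (16 / \<epsilon> + 1)" using \<eta> by (simp add: \<delta>_def)
    moreover note pos
    ultimately show ?thesis using \<eta> by (simp add: field_simps)
  qed
  have "16 / \<epsilon> > 0" using eps by simp
  hence "1 / \<eta> > 0" using inv by linarith
  hence "\<lfloor>1 / \<eta>\<rfloor> \<ge> 0" by simp
  hence rJ: "real J = of_int \<lfloor>1 / \<eta>\<rfloor>" unfolding J_def by simp
  have J: "real J \<le> 1 / \<eta>" "real J > 1 / \<eta> - 1"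
    unfolding rJ using floor_correct[of "1 / \<eta>"] by linarith+
  have J1: "real J * \<eta> \<le> 1" using J(1) \<eta> by (simp add: field_simps)
  have J2: "real J * \<eta> > 1 - \<eta>" using J(2) \<eta> by (simp add: field_simps)
  have Jeps: "real J > 16 / \<epsilon>" using J(2) inv by linarith
  define L where "L = J * q"
  have Lpos: "L > 0" using Jeps eps q unfolding L_def
    by (metis divide_pos_pos mult_pos_pos of_nat_0_less_iff order.strict_trans zero_less_numeral)
  have blk: "\<bar>real (cnt \<beta> x a b L) - (b - a) * real L\<bar> \<le> 8 * real q" for x
    unfolding L_def by (rule cnt_block[OF _ \<eta>_def[symmetric] \<eta>(1) J1 J2 ab]) (use q in simp)
  define M0 where "M0 = nat \<lceil>2 * real L / \<epsilon>\<rceil>"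
  show ?thesis
  proof (intro exI allI impI)
    fix M x assume M: "M \<ge> M0"
    have LM: "real L \<le> \<epsilon> * real M / 2"
    proof -
      have "2 * real L / \<epsilon> \<le> real M" using M unfolding M0_def by linarith
      then show ?thesis using eps by (simp add: field_simps)
    qed
    define Q where "Q = M div L"
    define R where "R = M mod L"
    have MQR: "M = Q * L + R" by (simp add: Q_def R_def)
    have RL: "R < L" using Lpos by (simp add: R_def)
    have 1: "\<bar>real (cnt \<beta> x a b (Q * L)) - (b - a) * real (Q * L)\<bar> \<le> real Q * (8 * real q)"
      by (rule cnt_multi_block[OF blk])
    have r1: "real (cnt \<beta> (x + real (Q * L) * \<beta>) a b R) \<le> real R" using cnt_le by simp
    have r2: "0 \<le> (b - a) * real R" "(b - a) * real R \<le> real R"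
    proof -
      show "0 \<le> (b - a) * real R" using ab by simp
      have "(b - a) * real R \<le> 1 * real R" using ab by (intro mult_right_mono) auto
      then show "(b - a) * real R \<le> real R" by simp
    qed
    have QL: "real Q * real L \<le> real M" using MQR by simp
    have "real Q * (8 * real q) \<le> \<epsilon> * real M / 2"
    proof -
      have "real Q * (8 * real q) * 16 \<le> real Q * (8 * real q) * (\<epsilon> * real J)"
        using Jeps eps by (intro mult_left_mono) (auto simp: field_simps)
      also have "\<dots> = 8 * \<epsilon> * (real Q * real L)" by (simp add: L_def algebra_simps)
      also have "\<dots> \<le> 8 * \<epsilon> * real M" using QL eps by simp
      finally show ?thesis by simp
    qed
    moreover have "cnt \<beta> x a b M = cnt \<beta> x a b (Q * L) + cnt \<beta> (x + real (Q * L) * \<beta>) a b R"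
      unfolding MQR by (rule cnt_add)
    moreover have "(b - a) * real M = (b - a) * real (Q * L) + (b - a) * real R" unfolding MQR by (simp add: algebra_simps)
    ultimately show "\<bar>real (cnt \<beta> x a b M) - (b - a) * real M\<bar> \<le> \<epsilon> * real M"
      using 1 r1 r2 LM RL by (simp add: abs_le_iff)
  qed
qed


definition indr :: "bool \<Rightarrow> real" where "indr P = (if P then 1 else 0)"

lemma indr_simps[simp]: "indr True = 1" "indr False = 0" by (simp_all add: indr_def)
lemma indr_ge0[simp]: "0 \<le> indr P" and indr_le1[simp]: "indr P \<le> 1" by (simp_all add: indr_def)

definition win :: "nat \<Rightarrow> int set" where "win k = {- int k .. int k}"

lemma finite_win[simp]: "finite (win k)" by (simp add: win_def)
lemma card_win: "card (win k) = 2 * k + 1" by (simp add: win_def)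

lemma sum_win_cnt:
  "(\<Sum>t\<in>win k. indr (frac (x + of_int t * \<beta>) \<in> {a..<b})) = real (cnt \<beta> (x - real k * \<beta>) a b (2 * k + 1))"
proof -
  define h where "h u = int u - int k" for u :: nat
  have inj: "inj_on h {..<2 * k + 1}" by (auto simp: h_def inj_on_def)
  have img: "h ` {..<2 * k + 1} = win k"
  proof
    show "h ` {..<2 * k + 1} \<subseteq> win k" by (auto simp: h_def win_def)
    show "win k \<subseteq> h ` {..<2 * k + 1}"
    proof
      fix t assume "t \<in> win k"
      then have "t = h (nat (t + int k))" "nat (t + int k) < 2 * k + 1" by (auto simp: h_def win_def)
      then show "t \<in> h ` {..<2 * k + 1}" by blast
    qed
  qed
  have "(\<Sum>t\<in>win k. indr (frac (x + of_int t * \<beta>) \<in> {a..<b})) =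
        (\<Sum>u<2 * k + 1. indr (frac (x + of_int (h u) * \<beta>) \<in> {a..<b}))"
    unfolding img[symmetric] by (rule sum.reindex[OF inj, unfolded comp_def])
  also have "\<dots> = (\<Sum>u<2 * k + 1. real (ind (frac ((x - real k * \<beta>) + real u * \<beta>) \<in> {a..<b})))"
  proof (rule sum.cong[OF refl])
    fix u
    have "x + of_int (h u) * \<beta> = (x - real k * \<beta>) + real u * \<beta>" by (simp add: h_def algebra_simps)
    then show "indr (frac (x + of_int (h u) * \<beta>) \<in> {a..<b}) = real (ind (frac ((x - real k * \<beta>) + real u * \<beta>) \<in> {a..<b}))"
      by (simp only: indr_def ind_def) simp
  qed
  also have "\<dots> = real (cnt \<beta> (x - real k * \<beta>) a b (2 * k + 1))" by (simp add: cnt_def)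
  finally show ?thesis .
qed

lemma freq_interval:
  fixes \<beta> a b x :: real
  assumes irr: "\<beta> \<notin> \<rat>" and ab: "0 \<le> a" "a \<le> b" "b \<le> 1"
  shows "(\<lambda>k. (\<Sum>t\<in>win k. indr (frac (x + of_int t * \<beta>) \<in> {a..<b})) / real (2 * k + 1)) \<longlonglongrightarrow> b - a"
proof (rule LIMSEQ_I)
  fix r :: real assume r: "r > 0"
  obtain M0 where M0: "\<And>M x. M \<ge> M0 \<Longrightarrow> \<bar>real (cnt \<beta> x a b M) - (b - a) * real M\<bar> \<le> r / 2 * real M"
    using equidist_unif[OF irr ab, of "r/2"] r by auto
  show "\<exists>no. \<forall>k\<ge>no. norm ((\<Sum>t\<in>win k. indr (frac (x + of_int t * \<beta>) \<in> {a..<b})) / real (2 * k + 1) - (b - a)) < r"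
  proof (intro exI allI impI)
    fix k assume k: "k \<ge> M0"
    have pos: "real (2 * k + 1) > 0" by simp
    have 1: "\<bar>real (cnt \<beta> (x - real k * \<beta>) a b (2 * k + 1)) - (b - a) * real (2 * k + 1)\<bar> \<le> r / 2 * real (2 * k + 1)"
      by (rule M0) (use k in simp)
    have "\<bar>real (cnt \<beta> (x - real k * \<beta>) a b (2 * k + 1)) / real (2 * k + 1) - (b - a)\<bar>
        = \<bar>real (cnt \<beta> (x - real k * \<beta>) a b (2 * k + 1)) - (b - a) * real (2 * k + 1)\<bar> / real (2 * k + 1)"
      using pos by (simp add: field_simps abs_divide)
    also have "\<dots> \<le> r / 2" using 1 pos by (simp add: divide_le_eq)
    also have "\<dots> < r" using r by simp
    finally show "norm ((\<Sum>t\<in>win k. indr (frac (x + of_int t * \<beta>) \<in> {a..<b})) / real (2 * k + 1) - (b - a)) < r"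
      unfolding sum_win_cnt by simp
  qed
qed

lemma frac_eq_imp_Ints: "frac a = frac b \<Longrightarrow> a - b \<in> \<int>"
proof -
  assume "frac a = frac b"
  then have "a - b = of_int (\<lfloor>a\<rfloor> - \<lfloor>b\<rfloor>)" by (simp add: frac_def)
  then show ?thesis by simp
qed

lemma single_hit:
  fixes \<beta> x c :: real
  assumes irr: "\<beta> \<notin> \<rat>"
  shows "card {t::int. frac (x + of_int t * \<beta>) = c} \<le> 1"
proof (cases "{t::int. frac (x + of_int t * \<beta>) = c} = {}")
  case True then show ?thesis by simp
next
  case False
  then obtain t0 where t0: "frac (x + of_int t0 * \<beta>) = c" by auto
  have "{t::int. frac (x + of_int t * \<beta>) = c} \<subseteq> {t0}"
  proof
    fix t assume "t \<in> {t::int. frac (x + of_int t * \<beta>) = c}"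
    then have "frac (x + of_int t * \<beta>) = frac (x + of_int t0 * \<beta>)" using t0 by simp
    then have "(x + of_int t * \<beta>) - (x + of_int t0 * \<beta>) \<in> \<int>" by (rule frac_eq_imp_Ints)
    then obtain z where z: "of_int (t - t0) * \<beta> = of_int z" by (auto simp: algebra_simps elim: Ints_cases)
    show "t \<in> {t0}"
    proof (rule ccontr)
      assume "t \<notin> {t0}"
      then have ne: "of_int (t - t0) \<noteq> (0::real)" by simp
      then have "\<beta> = of_int z / of_int (t - t0)" using z by (simp add: field_simps)
      then have "\<beta> \<in> \<rat>" by simp
      then show False using irr by simp
    qed
  qed
  then have "card {t::int. frac (x + of_int t * \<beta>) = c} \<le> card {t0}" by (rule card_mono[rotated]) simp
  then show ?thesis by simp
qed


definition cell :: "nat \<Rightarrow> nat \<Rightarrow> real set" where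
  "cell N j = {real j / real N ..< real (j + 1) / real N}"

lemma cell_iff:
  assumes N: "N > 0" and u: "0 \<le> u" "u < 1"
  shows "u \<in> cell N j \<longleftrightarrow> j = nat \<lfloor>u * real N\<rfloor>"
proof -
  have "u \<in> cell N j \<longleftrightarrow> real j \<le> u * real N \<and> u * real N < real j + 1"
    using N by (simp add: cell_def field_simps)
  also have "\<dots> \<longleftrightarrow> \<lfloor>u * real N\<rfloor> = int j"
  proof -
    have "\<lfloor>u * real N\<rfloor> = int j \<longleftrightarrow> real_of_int (int j) \<le> u * real N \<and> u * real N < real_of_int (int j) + 1"
      by (rule floor_eq_iff)
    then show ?thesis by simp
  qed
  also have "\<dots> \<longleftrightarrow> j = nat \<lfloor>u * real N\<rfloor>"
  proof -
    have "0 \<le> u * real N" using u by simp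
    then have "0 \<le> \<lfloor>u * real N\<rfloor>" by simp
    then show ?thesis by auto
  qed
  finally show ?thesis .
qed

lemma cell_idx_lt:
  assumes N: "N > 0" and u: "0 \<le> u" "u < 1"
  shows "nat \<lfloor>u * real N\<rfloor> < N"
proof -
  have "u * real N < real N" using N u by simp
  then have "\<lfloor>u * real N\<rfloor> < int N" by (simp add: floor_less_iff)
  then have "nat \<lfloor>u * real N\<rfloor> < nat (int N)" using N by (subst zless_nat_conj) simp
  then show ?thesis by simp
qed

lemma sum_cells:
  assumes N: "N > 0" and fin: "finite T"
  shows "(\<Sum>j\<in>T. indr (frac z \<in> cell N j)) = indr (nat \<lfloor>frac z * real N\<rfloor> \<in> T)"
proof -
  have "(\<Sum>j\<in>T. indr (frac z \<in> cell N j)) = (\<Sum>j\<in>T. if j = nat \<lfloor>frac z * real N\<rfloor> then 1 else 0)"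
    using cell_iff[OF N, of "frac z"] by (intro sum.cong) (auto simp: frac_lt_1 indr_def)
  also have "\<dots> = indr (nat \<lfloor>frac z * real N\<rfloor> \<in> T)" using fin by (simp add: sum.delta indr_def)
  finally show ?thesis .
qed

lemma freq_cells:
  assumes irr: "\<beta> \<notin> \<rat>" and N: "N > 0" and T: "T \<subseteq> {..<N}"
  shows "(\<lambda>k. (\<Sum>t\<in>win k. \<Sum>j\<in>T. indr (frac (x + of_int t * \<beta>) \<in> cell N j)) / real (2 * k + 1))
           \<longlonglongrightarrow> real (card T) / real N"
proof -
  have finT: "finite T" using T finite_subset by blast
  have each: "(\<lambda>k. (\<Sum>t\<in>win k. indr (frac (x + of_int t * \<beta>) \<in> cell N j)) / real (2 * k + 1))
           \<longlonglongrightarrow> 1 / real N" if "j \<in> T" for j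
  proof -
    have jN: "j < N" using that T by auto
    have ab: "0 \<le> real j / real N" "real j / real N \<le> real (j + 1) / real N" "real (j + 1) / real N \<le> 1"
      using jN N by (auto simp: divide_right_mono field_simps)
    have "(\<lambda>k. (\<Sum>t\<in>win k. indr (frac (x + of_int t * \<beta>) \<in> cell N j)) / real (2 * k + 1))
           \<longlonglongrightarrow> real (j + 1) / real N - real j / real N"
      unfolding cell_def by (rule freq_interval[OF irr ab])
    moreover have "real (j + 1) / real N - real j / real N = 1 / real N" by (simp add: add_divide_distrib)
    ultimately show ?thesis by simp
  qed
  have "(\<lambda>k. \<Sum>j\<in>T. (\<Sum>t\<in>win k. indr (frac (x + of_int t * \<beta>) \<in> cell N j)) / real (2 * k + 1))
           \<longlonglongrightarrow> (\<Sum>j\<in>T. 1 / real N)"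
    by (rule tendsto_sum) (rule each)
  moreover have "(\<Sum>j\<in>T. 1 / real N) = real (card T) / real N" by simp
  moreover have "(\<Sum>t\<in>win k. \<Sum>j\<in>T. indr (frac (x + of_int t * \<beta>) \<in> cell N j)) / real (2 * k + 1)
      = (\<Sum>j\<in>T. (\<Sum>t\<in>win k. indr (frac (x + of_int t * \<beta>) \<in> cell N j)) / real (2 * k + 1))" for k
    by (simp add: sum_divide_distrib[symmetric] sum.swap[of _ "win k"])
  ultimately show ?thesis by simp
qed

lemma jordan_freq:
  fixes S :: "real \<Rightarrow> bool" and Cr :: "real set" and \<beta>0 :: real
  assumes per: "\<And>z. S z = S (frac z)"
    and finCr: "finite Cr"
    and nocross: "\<And>u u'. 0 \<le> u \<Longrightarrow> u < u' \<Longrightarrow> u' < 1 \<Longrightarrow> (\<forall>c\<in>Cr. \<not> (u < c \<and> c \<le> u')) \<Longrightarrow> (S u \<longleftrightarrow> S u')"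
    and irr0: "\<beta>0 \<notin> \<rat>"
  shows "\<exists>A. \<forall>\<beta> x. \<beta> \<notin> \<rat> \<longrightarrow>
           (\<lambda>k. (\<Sum>t\<in>win k. indr (S (x + of_int t * \<beta>))) / real (2 * k + 1)) \<longlonglongrightarrow> A"
proof -
  define good where "good N j \<longleftrightarrow> (\<forall>c\<in>Cr. \<not> (real j / real N < c \<and> c < real (j + 1) / real N))" for N j
  define In where "In N = {j. j < N \<and> good N j \<and> S (real j / real N)}" for N
  define Bad where "Bad N = {j. j < N \<and> \<not> good N j}" for N
  define F where "F \<beta> x k = (\<Sum>t\<in>win k. indr (S (x + of_int t * \<beta>))) / real (2 * k + 1)" for \<beta> x k
  define C where "C = real (card Cr)"
  have C0: "C \<ge> 0" by (simp add: C_def)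
  have finIn: "finite (In N)" and finBad: "finite (Bad N)" for N by (auto simp: In_def Bad_def)
  have InN: "In N \<subseteq> {..<N}" and BadN: "Bad N \<subseteq> {..<N}" for N by (auto simp: In_def Bad_def)
  have cardBad: "card (Bad N) \<le> card Cr" if N: "N > 0" for N
  proof -
    define f where "f j = (SOME c. c \<in> Cr \<and> real j / real N < c \<and> c < real (j + 1) / real N)" for j
    have fj: "f j \<in> Cr \<and> real j / real N < f j \<and> f j < real (j + 1) / real N" if "j \<in> Bad N" for j
    proof -
      have "\<exists>c. c \<in> Cr \<and> real j / real N < c \<and> c < real (j + 1) / real N"
        using that by (auto simp: Bad_def good_def)
      then show ?thesis unfolding f_def by (rule someI_ex)
    qed
    have "inj_on f (Bad N)"
    proof (rule inj_onI)
      fix i j assume i: "i \<in> Bad N" and j: "j \<in> Bad N" and e: "f i = f j"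
      have "real i / real N < real (j + 1) / real N" "real j / real N < real (i + 1) / real N"
        using fj[OF i] fj[OF j] e by auto
      then have "real i < real (j + 1)" "real j < real (i + 1)"
        using N by (simp_all add: divide_less_cancel)
      then show "i = j" by simp
    qed
    moreover have "f ` Bad N \<subseteq> Cr" using fj by auto
    ultimately show ?thesis using finCr by (rule card_inj_on_le)
  qed
  have same_cell: "S (frac z) \<longleftrightarrow> S (real (nat \<lfloor>frac z * real N\<rfloor>) / real N)"
    if N: "N > 0" and g: "good N (nat \<lfloor>frac z * real N\<rfloor>)" for N z
  proof -
    define j where "j = nat \<lfloor>frac z * real N\<rfloor>"
    have inc: "frac z \<in> cell N j" using cell_iff[OF N, of "frac z"] by (simp add: frac_lt_1 j_def)
    then have lo: "real j / real N \<le> frac z" and hi: "frac z < real (j + 1) / real N" by (auto simp: cell_def)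
    show ?thesis
    proof (cases "real j / real N = frac z")
      case True then show ?thesis by (simp add: j_def)
    next
      case False
      then have lt: "real j / real N < frac z" using lo by simp
      have "S (real j / real N) \<longleftrightarrow> S (frac z)"
      proof (rule nocross)
        show "0 \<le> real j / real N" by simp
        show "real j / real N < frac z" by (rule lt)
        show "frac z < 1" by (rule frac_lt_1)
        show "\<forall>c\<in>Cr. \<not> (real j / real N < c \<and> c \<le> frac z)"
          using g hi unfolding good_def j_def[symmetric] by force
      qed
      then show ?thesis by (simp add: j_def)
    qed
  qed
  have lower: "(\<Sum>j\<in>In N. indr (frac z \<in> cell N j)) \<le> indr (S z)" if N: "N > 0" for N z
  proof -
    have "(\<Sum>j\<in>In N. indr (frac z \<in> cell N j)) = indr (nat \<lfloor>frac z * real N\<rfloor> \<in> In N)"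
      by (rule sum_cells[OF N finIn])
    also have "\<dots> \<le> indr (S z)"
    proof (cases "nat \<lfloor>frac z * real N\<rfloor> \<in> In N")
      case True
      then have "good N (nat \<lfloor>frac z * real N\<rfloor>)" "S (real (nat \<lfloor>frac z * real N\<rfloor>) / real N)"
        by (auto simp: In_def)
      then have "S z" using same_cell[OF N] per by blast
      then show ?thesis by simp
    qed (simp add: indr_def)
    finally show ?thesis .
  qed
  have upper: "indr (S z) \<le> (\<Sum>j\<in>In N \<union> Bad N. indr (frac z \<in> cell N j))" if N: "N > 0" for N z
  proof -
    have "(\<Sum>j\<in>In N \<union> Bad N. indr (frac z \<in> cell N j)) = indr (nat \<lfloor>frac z * real N\<rfloor> \<in> In N \<union> Bad N)"
      by (rule sum_cells[OF N]) (simp add: finIn finBad)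
    moreover have "nat \<lfloor>frac z * real N\<rfloor> \<in> In N \<union> Bad N" if "S z"
    proof -
      have lt: "nat \<lfloor>frac z * real N\<rfloor> < N" by (rule cell_idx_lt[OF N]) (auto simp: frac_lt_1)
      show ?thesis
      proof (cases "good N (nat \<lfloor>frac z * real N\<rfloor>)")
        case True
        then have "S (real (nat \<lfloor>frac z * real N\<rfloor>) / real N)" using same_cell[OF N True] per that by blast
        then show ?thesis using True lt by (auto simp: In_def)
      next
        case False then show ?thesis using lt by (auto simp: Bad_def)
      qed
    qed
    ultimately show ?thesis by (cases "S z") (auto simp: indr_def)
  qed
  have ev: "eventually (\<lambda>k. real (card (In N)) / real N - \<epsilon> < F \<beta> x k \<and>
                            F \<beta> x k < (real (card (In N)) + C) / real N + \<epsilon>) sequentially"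
    if irr: "\<beta> \<notin> \<rat>" and N: "N > 0" and eps: "\<epsilon> > 0" for \<beta> x N \<epsilon>
  proof -
    have t1: "(\<lambda>k. (\<Sum>t\<in>win k. \<Sum>j\<in>In N. indr (frac (x + of_int t * \<beta>) \<in> cell N j)) / real (2 * k + 1))
           \<longlonglongrightarrow> real (card (In N)) / real N" by (rule freq_cells[OF irr N InN])
    have t2: "(\<lambda>k. (\<Sum>t\<in>win k. \<Sum>j\<in>In N \<union> Bad N. indr (frac (x + of_int t * \<beta>) \<in> cell N j)) / real (2 * k + 1))
           \<longlonglongrightarrow> real (card (In N \<union> Bad N)) / real N" by (rule freq_cells[OF irr N]) (use InN BadN in auto)
    have cU: "real (card (In N \<union> Bad N)) / real N \<le> (real (card (In N)) + C) / real N"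
    proof -
      have "card (In N \<union> Bad N) \<le> card (In N) + card (Bad N)" by (rule card_Un_le)
      also have "\<dots> \<le> card (In N) + card Cr" using cardBad[OF N] by simp
      finally have "real (card (In N \<union> Bad N)) \<le> real (card (In N)) + C" unfolding C_def by linarith
      then show ?thesis using N by (simp add: divide_right_mono)
    qed
    have e1: "eventually (\<lambda>k. real (card (In N)) / real N - \<epsilon> < (\<Sum>t\<in>win k. \<Sum>j\<in>In N. indr (frac (x + of_int t * \<beta>) \<in> cell N j)) / real (2 * k + 1)) sequentially"
      by (rule order_tendstoD(1)[OF t1]) (use eps in simp)
    have e2: "eventually (\<lambda>k. (\<Sum>t\<in>win k. \<Sum>j\<in>In N \<union> Bad N. indr (frac (x + of_int t * \<beta>) \<in> cell N j)) / real (2 * k + 1) < real (card (In N \<union> Bad N)) / real N + \<epsilon>) sequentially"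
      by (rule order_tendstoD(2)[OF t2]) (use eps in simp)
    show ?thesis using e1 e2
    proof eventually_elim
      case (elim k)
      have pos: "real (2 * k + 1) > 0" by simp
      have s1: "(\<Sum>t\<in>win k. \<Sum>j\<in>In N. indr (frac (x + of_int t * \<beta>) \<in> cell N j)) \<le> (\<Sum>t\<in>win k. indr (S (x + of_int t * \<beta>)))"
        by (rule sum_mono) (rule lower[OF N])
      have s2: "(\<Sum>t\<in>win k. indr (S (x + of_int t * \<beta>))) \<le> (\<Sum>t\<in>win k. \<Sum>j\<in>In N \<union> Bad N. indr (frac (x + of_int t * \<beta>) \<in> cell N j))"
        by (rule sum_mono) (rule upper[OF N])
      have d1: "(\<Sum>t\<in>win k. \<Sum>j\<in>In N. indr (frac (x + of_int t * \<beta>) \<in> cell N j)) / real (2 * k + 1) \<le> F \<beta> x k"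
        unfolding F_def using s1 pos by (simp add: divide_right_mono)
      have d2: "F \<beta> x k \<le> (\<Sum>t\<in>win k. \<Sum>j\<in>In N \<union> Bad N. indr (frac (x + of_int t * \<beta>) \<in> cell N j)) / real (2 * k + 1)"
        unfolding F_def using s2 pos by (simp add: divide_right_mono)
      show ?case using elim d1 d2 cU by linarith
    qed
  qed
  define g where "g N = real (card (In N)) / real N" for N
  have g1: "g N \<le> 1" if "N > 0" for N
  proof -
    have "card (In N) \<le> card {..<N}" using InN by (rule card_mono[rotated]) simp
    then show ?thesis using that by (simp add: g_def)
  qed
  have gcmp: "g N \<le> g M + C / real M" if N: "N > 0" and M: "M > 0" for N M
  proof (rule field_le_epsilon)
    fix e :: real assume e: "e > 0"
    have e2: "e / 2 > 0" using e by simp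
    have "eventually (\<lambda>k. (g N - e/2 < F \<beta>0 0 k \<and> F \<beta>0 0 k < (real (card (In N)) + C) / real N + e/2) \<and>
                          (g M - e/2 < F \<beta>0 0 k \<and> F \<beta>0 0 k < (real (card (In M)) + C) / real M + e/2)) sequentially"
      unfolding g_def by (rule eventually_conj[OF ev[OF irr0 N e2] ev[OF irr0 M e2]])
    then obtain k where k: "g N - e/2 < F \<beta>0 0 k" "F \<beta>0 0 k < (real (card (In M)) + C) / real M + e/2"
      unfolding eventually_sequentially by blast
    have "(real (card (In M)) + C) / real M = g M + C / real M" by (simp add: g_def add_divide_distrib)
    then show "g N \<le> g M + C / real M + e" using k by linarith
  qed
  define A where "A = Sup (g ` {0<..})"
  have bdd: "bdd_above (g ` {0<..})" using g1 by (auto intro!: bdd_aboveI[of _ 1])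
  have gA: "g N \<le> A" if "N > 0" for N unfolding A_def using bdd that by (intro cSup_upper) auto
  have Ag: "A \<le> g M + C / real M" if M: "M > 0" for M
    unfolding A_def by (rule cSup_least) (auto intro: gcmp[OF _ M])
  show ?thesis
  proof (intro exI allI impI)
    fix \<beta> x :: real assume irr: "\<beta> \<notin> \<rat>"
    show "(\<lambda>k. (\<Sum>t\<in>win k. indr (S (x + of_int t * \<beta>))) / real (2 * k + 1)) \<longlonglongrightarrow> A"
    proof (rule LIMSEQ_I)
      fix r :: real assume r: "r > 0"
      define M where "M = nat \<lceil>4 * (C + 1) / r\<rceil> + 1"
      have M: "M > 0" by (simp add: M_def)
      have "4 * (C + 1) / r \<le> real M" unfolding M_def by linarith
      then have CM: "C / real M < r / 2"
      proof -
        assume h: "4 * (C + 1) / r \<le> real M"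
        have "4 * (C + 1) \<le> real M * r" using h r by (simp add: field_simps)
        then have "2 * C + 2 \<le> real M * (r / 2)" by (simp add: field_simps)
        then have "C < real M * (r / 2)" using C0 by linarith
        then show ?thesis using M by (simp add: field_simps)
      qed
      have "eventually (\<lambda>k. g M - r/4 < F \<beta> x k \<and> F \<beta> x k < (real (card (In M)) + C) / real M + r/4) sequentially"
        using ev[OF irr M, of "r/4" x] r unfolding g_def by simp
      then obtain k0 where k0: "\<And>k. k \<ge> k0 \<Longrightarrow> g M - r/4 < F \<beta> x k \<and> F \<beta> x k < g M + C / real M + r/4"
        unfolding eventually_sequentially by (auto simp: g_def add_divide_distrib)
      show "\<exists>no. \<forall>k\<ge>no. norm ((\<Sum>t\<in>win k. indr (S (x + of_int t * \<beta>))) / real (2 * k + 1) - A) < r"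
      proof (intro exI allI impI)
        fix k assume "k \<ge> k0"
        from k0[OF this] gA[OF M] Ag[OF M] CM C0 M
        show "norm ((\<Sum>t\<in>win k. indr (S (x + of_int t * \<beta>))) / real (2 * k + 1) - A) < r"
          unfolding F_def by (simp add: abs_less_iff) linarith
      qed
    qed
  qed
qed


definition pdom :: "pattern \<Rightarrow> int set" where "pdom p = {i. p i \<noteq> None}"
definition valid :: "pattern \<Rightarrow> bool" where
  "valid p \<longleftrightarrow> finite (pdom p) \<and> 0 \<in> pdom p \<and> (\<forall>i\<in>pdom p. 0 \<le> i)"
definition occ :: "(int \<Rightarrow> nat) \<Rightarrow> pattern \<Rightarrow> nat \<Rightarrow> nat" where
  "occ Y p k = card {A. A \<subseteq> {- int k..int k} \<and> A \<noteq> {} \<and> pattern_of Y A = p}"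
definition OccY :: "(int \<Rightarrow> nat) \<Rightarrow> pattern \<Rightarrow> int \<Rightarrow> bool" where
  "OccY Y p t \<longleftrightarrow> (\<forall>i\<in>pdom p. p i = Some (Y (t + i)))"
definition Sstd :: "pattern \<Rightarrow> real \<Rightarrow> real \<Rightarrow> bool" where
  "Sstd p \<beta> z \<longleftrightarrow> (\<forall>i\<in>pdom p. p i = Some (if frac (z + of_int i * \<beta>) < \<beta> then 0 else 1))"
definition Dm :: "pattern \<Rightarrow> nat" where "Dm p = nat (Max (pdom p))"

lemma sum_indr_card: "finite W \<Longrightarrow> (\<Sum>t\<in>W. indr (P t)) = real (card {t\<in>W. P t})"
proof -
  assume f: "finite W"
  have "{t\<in>W. P t} = W \<inter> Collect P" by auto
  then show ?thesis using f by (simp add: indr_def sum.If_cases)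
qed

lemma pdom_pattern_of:
  assumes "finite A" "A \<noteq> {}"
  shows "pdom (pattern_of Y A) = (\<lambda>a. a - Min A) ` A"
proof -
  have "i \<in> pdom (pattern_of Y A) \<longleftrightarrow> i + Min A \<in> A" for i by (simp add: pdom_def pattern_of_def)
  moreover have "i + Min A \<in> A \<longleftrightarrow> i \<in> (\<lambda>a. a - Min A) ` A" for i by force
  ultimately show ?thesis by blast
qed

lemma pattern_of_valid:
  assumes "finite A" "A \<noteq> {}" "pattern_of Y A = p"
  shows "valid p" and "A = (\<lambda>i. Min A + i) ` pdom p"
proof -
  have d: "pdom p = (\<lambda>a. a - Min A) ` A" using pdom_pattern_of[OF assms(1,2), of Y] assms(3) by simp
  show "valid p" unfolding valid_def d using assms(1,2) by (auto intro: Min_in)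
  show "A = (\<lambda>i. Min A + i) ` pdom p" unfolding d image_image by simp
qed

lemma Min_shift:
  assumes v: "valid p"
  shows "Min ((\<lambda>i. t + i) ` pdom p) = t"
  using v unfolding valid_def by (intro Min_eqI) force+

lemma occ_invalid: "\<not> valid p \<Longrightarrow> occ Y p k = 0"
proof -
  assume nv: "\<not> valid p"
  have "{A. A \<subseteq> {- int k..int k} \<and> A \<noteq> {} \<and> pattern_of Y A = p} = {}"
  proof (rule ccontr)
    assume "{A. A \<subseteq> {- int k..int k} \<and> A \<noteq> {} \<and> pattern_of Y A = p} \<noteq> {}"
    then obtain A where A: "A \<subseteq> {- int k..int k}" "A \<noteq> {}" "pattern_of Y A = p" by auto
    have "finite A" using A(1) finite_subset by blast
    then show False using pattern_of_valid(1)[OF _ A(2,3)] nv by simp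
  qed
  then show ?thesis by (simp add: occ_def)
qed

lemma occ_eq:
  assumes v: "valid p"
  shows "occ Y p k = card {t\<in>win k. (\<forall>i\<in>pdom p. t + i \<in> win k) \<and> OccY Y p t}"
proof -
  define T where "T = {t\<in>win k. (\<forall>i\<in>pdom p. t + i \<in> win k) \<and> OccY Y p t}"
  define AA where "AA = {A. A \<subseteq> {- int k..int k} \<and> A \<noteq> {} \<and> pattern_of Y A = p}"
  have D: "finite (pdom p)" "0 \<in> pdom p" "\<And>i. i \<in> pdom p \<Longrightarrow> 0 \<le> i" using v by (auto simp: valid_def)
  have img1: "(\<lambda>i. t + i) ` pdom p \<in> AA" if t: "t \<in> T" for t
  proof -
    have sub: "(\<lambda>i. t + i) ` pdom p \<subseteq> {- int k..int k}" using t by (auto simp: T_def win_def)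
    have ne: "(\<lambda>i. t + i) ` pdom p \<noteq> {}" using D by auto
    have "pattern_of Y ((\<lambda>i. t + i) ` pdom p) = p"
    proof
      fix i
      have m: "Min ((\<lambda>i. t + i) ` pdom p) = t" by (rule Min_shift[OF v])
      have "i + t \<in> (\<lambda>i. t + i) ` pdom p \<longleftrightarrow> i \<in> pdom p" by (auto simp: add.commute)
      then show "pattern_of Y ((\<lambda>i. t + i) ` pdom p) i = p i"
        using t unfolding pattern_of_def m by (auto simp: T_def OccY_def pdom_def add.commute)
    qed
    then show ?thesis using sub ne by (simp add: AA_def)
  qed
  have img2: "Min A \<in> T" and inv2: "(\<lambda>i. Min A + i) ` pdom p = A" if A: "A \<in> AA" for A
  proof -
    from A have fA: "finite A" and A': "A \<subseteq> {- int k..int k}" "A \<noteq> {}" "pattern_of Y A = p"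
      by (auto simp: AA_def intro: finite_subset)
    have eqA: "A = (\<lambda>i. Min A + i) ` pdom p" by (rule pattern_of_valid(2)[OF fA A'(2,3)])
    show "(\<lambda>i. Min A + i) ` pdom p = A" using eqA by simp
    have inA: "Min A + i \<in> A" if "i \<in> pdom p" for i using eqA that by blast
    have "Min A \<in> win k" using Min_in[OF fA A'(2)] A'(1) by (auto simp: win_def)
    moreover have "\<forall>i\<in>pdom p. Min A + i \<in> win k"
    proof
      fix i assume "i \<in> pdom p"
      then have "Min A + i \<in> A" by (rule inA)
      then show "Min A + i \<in> win k" using A'(1) by (auto simp: win_def)
    qed
    moreover have "OccY Y p (Min A)"
      unfolding OccY_def
    proof
      fix i assume i: "i \<in> pdom p"
      have "p i = pattern_of Y A i" using A'(3) by simp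
      also have "\<dots> = Some (Y (i + Min A))" using inA[OF i] by (simp add: pattern_of_def add.commute)
      finally show "p i = Some (Y (Min A + i))" by (simp add: add.commute)
    qed
    ultimately show "Min A \<in> T" by (simp add: T_def)
  qed
  have "bij_betw (\<lambda>t. (\<lambda>i. t + i) ` pdom p) T AA"
  proof (rule bij_betw_byWitness[where f'=Min])
    show "\<forall>a\<in>T. Min ((\<lambda>i. a + i) ` pdom p) = a" using Min_shift[OF v] by blast
    show "\<forall>a'\<in>AA. (\<lambda>i. Min a' + i) ` pdom p = a'" using inv2 by blast
    show "(\<lambda>t. (\<lambda>i. t + i) ` pdom p) ` T \<subseteq> AA" using img1 by blast
    show "Min ` AA \<subseteq> T" using img2 by blast
  qed
  then have "card T = card AA" by (rule bij_betw_same_card)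
  then show ?thesis by (simp add: occ_def T_def AA_def)
qed

lemma occ_approx:
  assumes v: "valid p"
  shows "real (occ Y p k) \<le> (\<Sum>t\<in>win k. indr (OccY Y p t))"
    and "(\<Sum>t\<in>win k. indr (OccY Y p t)) \<le> real (occ Y p k) + real (Dm p)"
proof -
  define T where "T = {t\<in>win k. (\<forall>i\<in>pdom p. t + i \<in> win k) \<and> OccY Y p t}"
  define OS where "OS = {t\<in>win k. OccY Y p t}"
  define E where "E = {int k - int (Dm p) + 1 .. int k}"
  have D: "finite (pdom p)" "0 \<in> pdom p" "\<And>i. i \<in> pdom p \<Longrightarrow> 0 \<le> i" using v by (auto simp: valid_def)
  have s: "(\<Sum>t\<in>win k. indr (OccY Y p t)) = real (card OS)" unfolding OS_def by (rule sum_indr_card) simp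
  have TO: "T \<subseteq> OS" by (auto simp: T_def OS_def)
  have finO: "finite OS" by (simp add: OS_def)
  have "OS \<subseteq> T \<union> E"
  proof
    fix t assume t: "t \<in> OS"
    show "t \<in> T \<union> E"
    proof (cases "\<forall>i\<in>pdom p. t + i \<in> win k")
      case True then show ?thesis using t by (auto simp: T_def OS_def)
    next
      case False
      then obtain i where i: "i \<in> pdom p" "t + i \<notin> win k" by auto
      have "i \<le> Max (pdom p)" using i(1) D(1) by simp
      moreover have "Max (pdom p) \<ge> 0" using D by (meson Max_ge order.trans order_refl)
      moreover have "t \<in> win k" using t by (simp add: OS_def)
      ultimately have "t + i > int k" "t \<le> int k" "int (Dm p) = Max (pdom p)"
        using i D(3)[OF i(1)] by (auto simp: win_def Dm_def)
      then show ?thesis using \<open>i \<le> Max (pdom p)\<close> by (auto simp: E_def)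
    qed
  qed
  then have "card OS \<le> card (T \<union> E)" by (rule card_mono[rotated]) (simp add: E_def T_def)
  also have "\<dots> \<le> card T + card E" by (rule card_Un_le)
  also have "card E = Dm p" by (simp add: E_def)
  finally have 1: "card OS \<le> card T + Dm p" .
  have 2: "card T \<le> card OS" using TO finO by (rule card_mono[rotated])
  have occ: "occ Y p k = card T" unfolding T_def by (rule occ_eq[OF v])
  show "real (occ Y p k) \<le> (\<Sum>t\<in>win k. indr (OccY Y p t))" unfolding s occ using 2 by simp
  show "(\<Sum>t\<in>win k. indr (OccY Y p t)) \<le> real (occ Y p k) + real (Dm p)" unfolding s occ using 1 by simp
qed


lemma hit_unique:
  fixes \<beta> x c :: real
  assumes irr: "\<beta> \<notin> \<rat>" and h: "frac (x + of_int t * \<beta>) = c" "frac (x + of_int t0 * \<beta>) = c"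
  shows "t = t0"
proof (rule ccontr)
  assume ne: "t \<noteq> t0"
  have "frac (x + of_int t * \<beta>) = frac (x + of_int t0 * \<beta>)" using h by simp
  then have "(x + of_int t * \<beta>) - (x + of_int t0 * \<beta>) \<in> \<int>" by (rule frac_eq_imp_Ints)
  then obtain z where z: "of_int (t - t0) * \<beta> = of_int z" by (auto simp: algebra_simps elim: Ints_cases)
  have "of_int (t - t0) \<noteq> (0::real)" using ne by simp
  then have "\<beta> = of_int z / of_int (t - t0)" using z by (simp add: field_simps)
  then have "\<beta> \<in> \<rat>" by simp
  then show False using irr by simp
qed

lemma single_hit_sub:
  fixes \<beta> x c :: real
  assumes irr: "\<beta> \<notin> \<rat>"
  shows "\<exists>t0. {t::int. frac (x + of_int t * \<beta>) = c} \<subseteq> {t0}"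
proof (cases "{t::int. frac (x + of_int t * \<beta>) = c} = {}")
  case True then show ?thesis by auto
next
  case False
  then obtain t0 where t0: "frac (x + of_int t0 * \<beta>) = c" by auto
  have "{t::int. frac (x + of_int t * \<beta>) = c} \<subseteq> {t0}" using hit_unique[OF irr _ t0] by blast
  then show ?thesis by blast
qed

lemma card_win_hit_le1:
  fixes \<beta> x c :: real
  assumes irr: "\<beta> \<notin> \<rat>"
  shows "(\<Sum>t\<in>win k. indr (frac (x + of_int t * \<beta>) = c)) \<le> 1"
proof -
  obtain t0 where t0: "{t::int. frac (x + of_int t * \<beta>) = c} \<subseteq> {t0}" using single_hit_sub[OF irr] by blast
  have "(\<Sum>t\<in>win k. indr (frac (x + of_int t * \<beta>) = c)) = real (card {t\<in>win k. frac (x + of_int t * \<beta>) = c})"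
    by (rule sum_indr_card) simp
  also have "card {t\<in>win k. frac (x + of_int t * \<beta>) = c} \<le> card {t0}"
    using t0 by (intro card_mono) auto
  finally show ?thesis by simp
qed

lemma sturm_std:
  assumes "sturmian \<beta> Y"
  shows "\<exists>x. \<forall>n. frac (x + of_int n * \<beta>) \<notin> {0, \<beta>} \<longrightarrow> Y n = (if frac (x + of_int n * \<beta>) < \<beta> then 0 else 1)"
proof -
  obtain x where x: "(\<forall>n. Y n = (if frac (x + of_int n * \<beta>) \<in> {0..<\<beta>} then 0 else 1)) \<or>
      (\<forall>n. Y n = (if frac (x + of_int n * \<beta>) \<in> {0<..\<beta>} then 0 else 1))"
    using assms unfolding sturmian_def by blast
  show ?thesis
  proof (intro exI allI impI)
    fix n assume h: "frac (x + of_int n * \<beta>) \<notin> {0, \<beta>}"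
    have ge: "frac (x + of_int n * \<beta>) \<ge> 0" by simp
    show "Y n = (if frac (x + of_int n * \<beta>) < \<beta> then 0 else 1)"
      using x h ge by (auto simp: less_le)
  qed
qed

lemma occ_vs_std:
  fixes \<beta> x :: real
  assumes irr: "\<beta> \<notin> \<rat>" and v: "valid p"
    and Y: "\<And>n. frac (x + of_int n * \<beta>) \<notin> {0, \<beta>} \<Longrightarrow> Y n = (if frac (x + of_int n * \<beta>) < \<beta> then 0 else 1)"
  shows "\<bar>(\<Sum>t\<in>win k. indr (OccY Y p t)) - (\<Sum>t\<in>win k. indr (Sstd p \<beta> (x + of_int t * \<beta>)))\<bar>
           \<le> 2 * real (card (pdom p))"
proof -
  have finD: "finite (pdom p)" using v by (simp add: valid_def)
  define h where "h i t = indr (frac ((x + of_int i * \<beta>) + of_int t * \<beta>) = 0) + indr (frac ((x + of_int i * \<beta>) + of_int t * \<beta>) = \<beta>)" for i t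
  have pt: "\<bar>indr (OccY Y p t) - indr (Sstd p \<beta> (x + of_int t * \<beta>))\<bar> \<le> (\<Sum>i\<in>pdom p. h i t)" for t
  proof (cases "\<exists>i\<in>pdom p. frac ((x + of_int i * \<beta>) + of_int t * \<beta>) \<in> {0, \<beta>}")
    case True
    then obtain i where i: "i \<in> pdom p" "frac ((x + of_int i * \<beta>) + of_int t * \<beta>) \<in> {0, \<beta>}" by blast
    have "1 \<le> h i t" using i(2) by (auto simp: h_def)
    also have "h i t \<le> (\<Sum>i\<in>pdom p. h i t)"
      by (rule member_le_sum[OF i(1) _ finD]) (simp add: h_def add_nonneg_nonneg)
    finally show ?thesis by (simp add: indr_def)
  next
    case False
    have "OccY Y p t \<longleftrightarrow> Sstd p \<beta> (x + of_int t * \<beta>)"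
      unfolding OccY_def Sstd_def
    proof (intro ball_cong refl)
      fix i assume i: "i \<in> pdom p"
      have e: "x + of_int (t + i) * \<beta> = (x + of_int i * \<beta>) + of_int t * \<beta>"
        "x + of_int t * \<beta> + of_int i * \<beta> = (x + of_int i * \<beta>) + of_int t * \<beta>" by (simp_all add: algebra_simps)
      have "frac ((x + of_int i * \<beta>) + of_int t * \<beta>) \<notin> {0, \<beta>}" using False i by blast
      then have "frac (x + of_int (t + i) * \<beta>) \<notin> {0, \<beta>}" by (metis e(1))
      then have "Y (t + i) = (if frac (x + of_int (t + i) * \<beta>) < \<beta> then 0 else 1)"
        by (rule Y)
      then have Yti: "Y (t + i) = (if frac ((x + of_int i * \<beta>) + of_int t * \<beta>) < \<beta> then 0 else 1)"
        by (metis e(1))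
      show "(p i = Some (Y (t + i))) = (p i = Some (if frac (x + of_int t * \<beta> + of_int i * \<beta>) < \<beta> then 0 else 1))"
        unfolding e(2) Yti by (rule refl)
    qed
    then have "\<bar>indr (OccY Y p t) - indr (Sstd p \<beta> (x + of_int t * \<beta>))\<bar> = 0" by simp
    also have "0 \<le> (\<Sum>i\<in>pdom p. h i t)" by (rule sum_nonneg) (simp add: h_def add_nonneg_nonneg)
    finally show ?thesis .
  qed
  have "\<bar>(\<Sum>t\<in>win k. indr (OccY Y p t)) - (\<Sum>t\<in>win k. indr (Sstd p \<beta> (x + of_int t * \<beta>)))\<bar>
      = \<bar>\<Sum>t\<in>win k. indr (OccY Y p t) - indr (Sstd p \<beta> (x + of_int t * \<beta>))\<bar>"
    by (simp add: sum_subtractf)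
  also have "\<dots> \<le> (\<Sum>t\<in>win k. \<bar>indr (OccY Y p t) - indr (Sstd p \<beta> (x + of_int t * \<beta>))\<bar>)" by (rule sum_abs)
  also have "\<dots> \<le> (\<Sum>t\<in>win k. \<Sum>i\<in>pdom p. h i t)" by (rule sum_mono) (rule pt)
  also have "\<dots> = (\<Sum>i\<in>pdom p. \<Sum>t\<in>win k. h i t)" by (rule sum.swap)
  also have "\<dots> \<le> (\<Sum>i\<in>pdom p. 2)"
  proof (rule sum_mono)
    fix i
    have "(\<Sum>t\<in>win k. h i t) = (\<Sum>t\<in>win k. indr (frac ((x + of_int i * \<beta>) + of_int t * \<beta>) = 0))
        + (\<Sum>t\<in>win k. indr (frac ((x + of_int i * \<beta>) + of_int t * \<beta>) = \<beta>))"
      by (simp add: h_def sum.distrib)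
    also have "\<dots> \<le> 1 + 1" by (intro add_mono card_win_hit_le1[OF irr])
    finally show "(\<Sum>t\<in>win k. h i t) \<le> 2" by simp
  qed
  also have "\<dots> = 2 * real (card (pdom p))" by simp
  finally show ?thesis .
qed

lemma NC:
  fixes w \<phi> \<delta> e :: real
  assumes d: "0 \<le> \<delta>" and e: "0 < e"
    and diff: "(frac (w - \<delta>) < \<phi> - e) \<noteq> (frac w < \<phi>)"
  shows "frac (w + (\<delta> + e)) < 3 * (\<delta> + e) \<or> frac (w - \<phi> + (\<delta> + e)) < 3 * (\<delta> + e)"
proof (cases "3 * (\<delta> + e) \<ge> 1")
  case True then show ?thesis using frac_lt_1[of "w + (\<delta> + e)"] by linarith
next
  case False
  define r where "r = \<delta> + e"
  have r: "3 * r < 1" "0 < r" "\<delta> \<le> r" using False d e by (auto simp: r_def)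
  define m where "m = \<lfloor>w\<rfloor>"
  have fw: "frac w = w - of_int m" by (simp add: frac_def m_def)
  have "0 \<le> frac w" by simp
  then have fw01: "0 \<le> w - of_int m" "w - of_int m < 1" using fw frac_lt_1[of w] by linarith+
  have le: "\<lfloor>w - \<delta>\<rfloor> \<le> m" unfolding m_def using d by (intro floor_mono) simp
  show ?thesis
  proof (cases "\<lfloor>w - \<delta>\<rfloor> = m")
    case False
    then have "\<lfloor>w - \<delta>\<rfloor> < m" using le by simp
    then have lt: "w - \<delta> < of_int m" by (simp add: floor_less_iff)
    have "frac (w + r) = w + r - of_int m"
      by (subst frac_unique_iff) (use lt fw01 r in auto)
    then have "frac (w + r) < 3 * r" using lt r by simp
    then show ?thesis by (simp add: r_def)
  next
    case True
    then have fwd: "frac (w - \<delta>) = frac w - \<delta>" by (simp add: frac_def m_def)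
    show ?thesis
    proof (cases "frac w < \<phi>")
      case True
      then have h: "frac w - \<delta> \<ge> \<phi> - e" using diff fwd by auto
      have "frac (w - \<phi> + r) = frac w - \<phi> + r"
        by (subst frac_unique_iff) (use h True fw r d in \<open>auto simp: r_def\<close>)
      then have "frac (w - \<phi> + r) < 3 * r" using True r by simp
      then show ?thesis by (simp add: r_def)
    next
      case False
      then have h: "frac w - \<delta> < \<phi> - e" "frac w \<ge> \<phi>" using diff fwd by auto
      have "frac (w - \<phi> + r) = frac w - \<phi> + r"
        by (subst frac_unique_iff) (use h fw r d in \<open>auto simp: r_def\<close>)
      then have "frac (w - \<phi> + r) < 3 * r" using h r by (simp add: r_def)
      then show ?thesis by (simp add: r_def)
    qed
  qed
qed


definition err :: "pattern \<Rightarrow> real \<Rightarrow> nat \<Rightarrow> real \<Rightarrow> real" where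
  "err p \<phi> n z = (\<Sum>i\<in>pdom p.
      indr (frac (z + of_int i * \<phi> + (of_int i + 1) / real n) < 3 * ((of_int i + 1) / real n)) +
      indr (frac (z + of_int i * \<phi> - \<phi> + (of_int i + 1) / real n) < 3 * ((of_int i + 1) / real n)))"

lemma err_nonneg: "valid p \<Longrightarrow> 0 \<le> err p \<phi> n z"
  unfolding err_def by (intro sum_nonneg add_nonneg_nonneg) simp_all

lemma sstd_err:
  fixes \<phi> z :: real and n :: nat
  assumes v: "valid p" and n: "n > 0"
  shows "\<bar>indr (Sstd p (\<phi> - 1 / real n) z) - indr (Sstd p \<phi> z)\<bar> \<le> err p \<phi> n z"
proof (cases "Sstd p (\<phi> - 1 / real n) z = Sstd p \<phi> z")
  case True then show ?thesis using err_nonneg[OF v] by simp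
next
  case False
  have finD: "finite (pdom p)" and nn: "\<And>i. i \<in> pdom p \<Longrightarrow> 0 \<le> i" using v by (auto simp: valid_def)
  obtain i where i: "i \<in> pdom p" and d: "(frac (z + of_int i * (\<phi> - 1 / real n)) < \<phi> - 1 / real n) \<noteq> (frac (z + of_int i * \<phi>) < \<phi>)"
  proof -
    have "\<exists>i\<in>pdom p. (frac (z + of_int i * (\<phi> - 1 / real n)) < \<phi> - 1 / real n) \<noteq> (frac (z + of_int i * \<phi>) < \<phi>)"
    proof (rule ccontr)
      assume "\<not> ?thesis"
      then have "Sstd p (\<phi> - 1 / real n) z = Sstd p \<phi> z" unfolding Sstd_def by auto
      then show False using False by simp
    qed
    then show ?thesis using that by blast
  qed
  define w where "w = z + of_int i * \<phi>"
  define \<delta> where "\<delta> = of_int i / real n"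
  define e where "e = 1 / real n"
  have ed: "0 \<le> \<delta>" "0 < e" using nn[OF i] n by (auto simp: \<delta>_def e_def)
  have w1: "z + of_int i * (\<phi> - 1 / real n) = w - \<delta>" by (simp add: w_def \<delta>_def algebra_simps)
  have de: "\<delta> + e = (of_int i + 1) / real n" by (simp add: \<delta>_def e_def add_divide_distrib)
  have "(frac (w - \<delta>) < \<phi> - e) \<noteq> (frac w < \<phi>)" using d unfolding w1 by (simp add: w_def e_def)
  from NC[OF ed this]
  have "frac (w + (\<delta> + e)) < 3 * (\<delta> + e) \<or> frac (w - \<phi> + (\<delta> + e)) < 3 * (\<delta> + e)" .
  then have one: "1 \<le> indr (frac (z + of_int i * \<phi> + (of_int i + 1) / real n) < 3 * ((of_int i + 1) / real n)) +
      indr (frac (z + of_int i * \<phi> - \<phi> + (of_int i + 1) / real n) < 3 * ((of_int i + 1) / real n))"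
    unfolding de w_def by (auto simp: indr_def)
  also have "\<dots> \<le> err p \<phi> n z" unfolding err_def
    by (rule member_le_sum[OF i _ finD]) (intro add_nonneg_nonneg; simp)
  finally show ?thesis by (simp add: indr_def)
qed

lemma freq_lt:
  fixes \<beta> x c b :: real
  assumes irr: "\<beta> \<notin> \<rat>" and b: "b \<ge> 0"
  shows "(\<lambda>k. (\<Sum>t\<in>win k. indr (frac (x + of_int t * \<beta> + c) < b)) / real (2 * k + 1)) \<longlonglongrightarrow> min 1 b"
proof -
  have e: "indr (frac (x + of_int t * \<beta> + c) < b) = indr (frac ((x + c) + of_int t * \<beta>) \<in> {0..<min 1 b})" for t
  proof -
    have 1: "x + of_int t * \<beta> + c = (x + c) + of_int t * \<beta>" by simp
    have 2: "frac ((x + c) + of_int t * \<beta>) < b \<longleftrightarrow> frac ((x + c) + of_int t * \<beta>) \<in> {0..<min 1 b}"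
      using frac_lt_1[of "(x + c) + of_int t * \<beta>"] by auto
    show ?thesis unfolding 1 using 2 by simp
  qed
  have "(\<lambda>k. (\<Sum>t\<in>win k. indr (frac ((x + c) + of_int t * \<beta>) \<in> {0..<min 1 b})) / real (2 * k + 1)) \<longlonglongrightarrow> min 1 b - 0"
    by (rule freq_interval[OF irr]) (use b in auto)
  then show ?thesis unfolding e by simp
qed

definition errlim :: "pattern \<Rightarrow> nat \<Rightarrow> real" where
  "errlim p n = (\<Sum>i\<in>pdom p. min 1 (3 * ((of_int i + 1) / real n)) + min 1 (3 * ((of_int i + 1) / real n)))"

lemma freq_err:
  fixes \<psi> \<phi> x :: real
  assumes irr: "\<psi> \<notin> \<rat>" and v: "valid p" and n: "n > 0"
  shows "(\<lambda>k. (\<Sum>t\<in>win k. err p \<phi> n (x + of_int t * \<psi>)) / real (2 * k + 1)) \<longlonglongrightarrow> errlim p n"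
proof -
  have nn: "\<And>i. i \<in> pdom p \<Longrightarrow> 0 \<le> i" using v by (auto simp: valid_def)
  have each: "(\<lambda>k. (\<Sum>t\<in>win k. indr (frac (x + of_int t * \<psi> + of_int i * \<phi> + (of_int i + 1) / real n) < 3 * ((of_int i + 1) / real n))) / real (2 * k + 1)
            + (\<Sum>t\<in>win k. indr (frac (x + of_int t * \<psi> + of_int i * \<phi> - \<phi> + (of_int i + 1) / real n) < 3 * ((of_int i + 1) / real n))) / real (2 * k + 1))
      \<longlonglongrightarrow> min 1 (3 * ((of_int i + 1) / real n)) + min 1 (3 * ((of_int i + 1) / real n))" if i: "i \<in> pdom p" for i
  proof (rule tendsto_add)
    have b: "3 * ((of_int i + 1) / real n) \<ge> 0" using nn[OF i] n by simp
    have e1: "x + of_int t * \<psi> + of_int i * \<phi> + (of_int i + 1) / real n = x + of_int t * \<psi> + (of_int i * \<phi> + (of_int i + 1) / real n)" for t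
      by simp
    have e2: "x + of_int t * \<psi> + of_int i * \<phi> - \<phi> + (of_int i + 1) / real n = x + of_int t * \<psi> + (of_int i * \<phi> - \<phi> + (of_int i + 1) / real n)" for t
      by simp
    show "(\<lambda>k. (\<Sum>t\<in>win k. indr (frac (x + of_int t * \<psi> + of_int i * \<phi> + (of_int i + 1) / real n) < 3 * ((of_int i + 1) / real n))) / real (2 * k + 1))
      \<longlonglongrightarrow> min 1 (3 * ((of_int i + 1) / real n))"
      unfolding e1 by (rule freq_lt[OF irr b])
    show "(\<lambda>k. (\<Sum>t\<in>win k. indr (frac (x + of_int t * \<psi> + of_int i * \<phi> - \<phi> + (of_int i + 1) / real n) < 3 * ((of_int i + 1) / real n))) / real (2 * k + 1))
      \<longlonglongrightarrow> min 1 (3 * ((of_int i + 1) / real n))"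
      unfolding e2 by (rule freq_lt[OF irr b])
  qed
  have "(\<lambda>k. \<Sum>i\<in>pdom p. (\<Sum>t\<in>win k. indr (frac (x + of_int t * \<psi> + of_int i * \<phi> + (of_int i + 1) / real n) < 3 * ((of_int i + 1) / real n))) / real (2 * k + 1)
            + (\<Sum>t\<in>win k. indr (frac (x + of_int t * \<psi> + of_int i * \<phi> - \<phi> + (of_int i + 1) / real n) < 3 * ((of_int i + 1) / real n))) / real (2 * k + 1))
      \<longlonglongrightarrow> errlim p n"
    unfolding errlim_def by (rule tendsto_sum) (rule each)
  moreover have "(\<Sum>t\<in>win k. err p \<phi> n (x + of_int t * \<psi>)) / real (2 * k + 1) =
     (\<Sum>i\<in>pdom p. (\<Sum>t\<in>win k. indr (frac (x + of_int t * \<psi> + of_int i * \<phi> + (of_int i + 1) / real n) < 3 * ((of_int i + 1) / real n))) / real (2 * k + 1)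
            + (\<Sum>t\<in>win k. indr (frac (x + of_int t * \<psi> + of_int i * \<phi> - \<phi> + (of_int i + 1) / real n) < 3 * ((of_int i + 1) / real n))) / real (2 * k + 1))" for k
    unfolding err_def by (simp add: sum.swap[of _ "win k"] sum.distrib sum_divide_distrib add_divide_distrib)
  ultimately show ?thesis by simp
qed

lemma errlim_le:
  assumes v: "valid p" and n: "n > 0"
  shows "errlim p n \<le> 6 * (\<Sum>i\<in>pdom p. of_int i + 1) / real n"
proof -
  have "errlim p n \<le> (\<Sum>i\<in>pdom p. 6 * ((of_int i + 1) / real n))"
    unfolding errlim_def by (rule sum_mono) linarith
  also have "\<dots> = 6 * (\<Sum>i\<in>pdom p. of_int i + 1) / real n"
    by (simp add: sum_distrib_left sum_divide_distrib[symmetric])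
  finally show ?thesis .
qed

lemma sstd_nocross:
  fixes \<phi> u u' :: real
  assumes u: "0 \<le> u" "u < u'" "u' < 1"
    and no: "\<forall>c\<in>(\<lambda>i. frac (- of_int i * \<phi>)) ` pdom p \<union> (\<lambda>i. frac (\<phi> - of_int i * \<phi>)) ` pdom p. \<not> (u < c \<and> c \<le> u')"
  shows "Sstd p \<phi> u \<longleftrightarrow> Sstd p \<phi> u'"
  unfolding Sstd_def
proof (intro ball_cong refl)
  fix i assume i: "i \<in> pdom p"
  define w where "w = u + of_int i * \<phi>"
  define w' where "w' = u' + of_int i * \<phi>"
  have ww: "w < w'" using u by (simp add: w_def w'_def)
  have fl: "\<lfloor>w\<rfloor> \<le> \<lfloor>w'\<rfloor>" using ww by (intro floor_mono) simp
  have cond: "(frac w < \<phi>) \<longleftrightarrow> (frac w' < \<phi>)"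
  proof (cases "\<lfloor>w\<rfloor> = \<lfloor>w'\<rfloor>")
    case False
    then have lt: "\<lfloor>w\<rfloor> + 1 \<le> \<lfloor>w'\<rfloor>" using fl by simp
    define c where "c = of_int \<lfloor>w'\<rfloor> - of_int i * \<phi>"
    have "w < of_int \<lfloor>w\<rfloor> + 1" by (simp add: floor_correct[of w, THEN conjunct2] )
    also have "\<dots> \<le> of_int \<lfloor>w'\<rfloor>" using lt by (metis of_int_add of_int_le_iff of_int_1)
    finally have c1: "u < c" by (simp add: c_def w_def)
    have "of_int \<lfloor>w'\<rfloor> \<le> w'" by (rule of_int_floor_le)
    then have c2: "c \<le> u'" unfolding c_def w'_def by linarith
    have "frac c = c" using c1 c2 u by (simp add: frac_eq)
    moreover have "frac c = frac (- of_int i * \<phi>)"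
    proof -
      have "c = - of_int i * \<phi> + of_int \<lfloor>w'\<rfloor>" by (simp add: c_def)
      then show ?thesis by (metis frac_add_of_int_right)
    qed
    ultimately have "c \<in> (\<lambda>i. frac (- of_int i * \<phi>)) ` pdom p" using i by auto
    then show ?thesis using no c1 c2 by blast
  next
    case True
    have fd: "frac w' = frac w + (u' - u)" using True by (simp add: frac_def w_def w'_def)
    show ?thesis
    proof (rule ccontr)
      assume nq: "\<not> ((frac w < \<phi>) \<longleftrightarrow> (frac w' < \<phi>))"
      then have h: "frac w < \<phi>" "\<phi> \<le> frac w'" using fd u by auto
      define c where "c = u + (\<phi> - frac w)"
      have c1: "u < c" "c \<le> u'" using h fd by (auto simp: c_def)
      have "c = \<phi> - of_int i * \<phi> + of_int \<lfloor>w\<rfloor>" by (simp add: c_def frac_def w_def)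
      then have "frac c = frac (\<phi> - of_int i * \<phi>)" by (metis frac_add_of_int_right)
      moreover have "frac c = c" using c1 u by (simp add: frac_eq)
      ultimately have "c \<in> (\<lambda>i. frac (\<phi> - of_int i * \<phi>)) ` pdom p" using i by auto
      then show False using no c1 by blast
    qed
  qed
  show "(p i = Some (if frac (u + of_int i * \<phi>) < \<phi> then 0 else 1)) =
        (p i = Some (if frac (u' + of_int i * \<phi>) < \<phi> then 0 else 1))"
    using cond by (simp add: w_def w'_def)
qed

lemma sstd_per: "Sstd p \<phi> z = Sstd p \<phi> (frac z)"
proof -
  have "frac (z + of_int i * \<phi>) = frac (frac z + of_int i * \<phi>)" for i
  proof -
    have "z + of_int i * \<phi> = (frac z + of_int i * \<phi>) + of_int \<lfloor>z\<rfloor>" by (simp add: frac_def)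
    then show ?thesis by (metis frac_add_of_int_right)
  qed
  then show ?thesis unfolding Sstd_def by simp
qed

lemma sstd_freq:
  fixes \<phi> :: real
  assumes v: "valid p" and irr: "\<phi> \<notin> \<rat>"
  shows "\<exists>A. \<forall>\<beta> x. \<beta> \<notin> \<rat> \<longrightarrow>
           (\<lambda>k. (\<Sum>t\<in>win k. indr (Sstd p \<phi> (x + of_int t * \<beta>))) / real (2 * k + 1)) \<longlonglongrightarrow> A"
proof (rule jordan_freq[OF _ _ _ irr])
  show "\<And>z. Sstd p \<phi> z = Sstd p \<phi> (frac z)" by (rule sstd_per)
  show "finite ((\<lambda>i. frac (- of_int i * \<phi>)) ` pdom p \<union> (\<lambda>i. frac (\<phi> - of_int i * \<phi>)) ` pdom p)"
    using v by (simp add: valid_def)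
  show "\<And>u u'. 0 \<le> u \<Longrightarrow> u < u' \<Longrightarrow> u' < 1 \<Longrightarrow>
     \<forall>c\<in>(\<lambda>i. frac (- of_int i * \<phi>)) ` pdom p \<union> (\<lambda>i. frac (\<phi> - of_int i * \<phi>)) ` pdom p. \<not> (u < c \<and> c \<le> u') \<Longrightarrow>
     Sstd p \<phi> u = Sstd p \<phi> u'"
    by (rule sstd_nocross)
qed


definition goodd :: "real \<Rightarrow> nat \<Rightarrow> nat \<Rightarrow> bool" where
  "goodd \<phi> n d \<longleftrightarrow> d \<ge> 1 \<and> d \<in> forbidden \<phi> \<and> frac (real d * (\<phi> - 1 / real n)) \<le> (1 - \<phi>) / 2"

lemma irr_mult_nat: "\<phi> \<notin> \<rat> \<Longrightarrow> n > 0 \<Longrightarrow> real n * \<phi> \<notin> \<rat>"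
proof
  assume irr: "\<phi> \<notin> \<rat>" and n: "n > 0" and r: "real n * \<phi> \<in> \<rat>"
  have "\<phi> = (real n * \<phi>) / real n" using n by simp
  also have "\<dots> \<in> \<rat>" by (rule Rats_divide[OF r]) simp
  finally show False using irr by simp
qed

lemma exists_hit:
  fixes \<beta> x a b :: real
  assumes irr: "\<beta> \<notin> \<rat>" and ab: "0 \<le> a" "a < b" "b \<le> 1"
  shows "\<exists>t::nat. frac (x + real t * \<beta>) \<in> {a..<b}"
proof -
  obtain M0 where M0: "\<And>M. M \<ge> M0 \<Longrightarrow> \<forall>x. \<bar>real (cnt \<beta> x a b M) - (b - a) * real M\<bar> \<le> (b - a) / 2 * real M"
    using equidist_unif[OF irr ab(1) _ ab(3), of "(b - a) / 2"] ab by fastforce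
  define M where "M = M0 + 1"
  have "\<bar>real (cnt \<beta> x a b M) - (b - a) * real M\<bar> \<le> (b - a) / 2 * real M" using M0[of M] by (simp add: M_def)
  moreover have "(b - a) / 2 * real M < (b - a) * real M" using ab by (simp add: M_def)
  ultimately have "real (cnt \<beta> x a b M) > 0" by linarith
  then have "cnt \<beta> x a b M \<noteq> 0" by simp
  then obtain t where "ind (frac (x + real t * \<beta>) \<in> {a..<b}) \<noteq> 0" unfolding cnt_def
    by (metis (no_types, lifting) sum.neutral)
  then show ?thesis by (auto simp: ind_def split: if_splits)
qed

lemma K1:
  fixes \<phi> :: real and n :: nat
  assumes irr: "\<phi> \<notin> \<rat>" and ph: "1/2 < \<phi>" "\<phi> < 1" and n: "n \<ge> 1" "\<phi> - 1 / real n > 0"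
  shows "\<exists>d. goodd \<phi> n d"
proof -
  define \<gamma> where "\<gamma> = (1 - \<phi>) / 2"
  have n2: "n \<ge> 2"
  proof (rule ccontr)
    assume "\<not> n \<ge> 2" then have "n = 1" using n by simp
    then show False using n ph by simp
  qed
  define r where "r = n div 2"
  have r1: "r \<ge> 1" using n2 by (simp add: r_def)
  have rn: "real r / real n \<le> 1/2" "real r / real n \<ge> 1/2 - 1 / (2 * real n)"
  proof -
    have "2 * r \<le> n" "n \<le> 2 * r + 1" by (simp_all add: r_def)
    then have a: "2 * real r \<le> real n" "real n \<le> 2 * real r + 1" by linarith+
    show "real r / real n \<le> 1/2" using a n2 by (simp add: field_simps)
    have e1: "1/2 - 1 / (2 * real n) = (real n - 1) / (2 * real n)" using n2 by (simp add: field_simps)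
    have "(real n - 1) / (2 * real n) \<le> (2 * real r) / (2 * real n)" using a n2 by (intro divide_right_mono) auto
    also have "\<dots> = real r / real n" using n2 by simp
    finally show "real r / real n \<ge> 1/2 - 1 / (2 * real n)" using e1 by simp
  qed
  define lo where "lo = max (real r / real n) (1 - \<phi>)"
  define hi where "hi = min (real r / real n + \<gamma>) \<phi>"
  have g: "\<gamma> > 0" using ph by (simp add: \<gamma>_def)
  have "1 - \<phi> < real r / real n + \<gamma>"
  proof -
    define q where "q = 1 / real n"
    define R where "R = real r / real n"
    have "q < \<phi>" using n by (simp add: q_def)
    moreover have "1/2 - q/2 \<le> R" using rn(2) by (simp add: q_def R_def)
    ultimately have "1 - \<phi> < R + (1/2 - \<phi>/2)" by linarith
    moreover have "(1 - \<phi>) / 2 = 1/2 - \<phi>/2" by simp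
    ultimately show ?thesis unfolding R_def \<gamma>_def by linarith
  qed
  moreover have "real r / real n < \<phi>" using rn(1) ph(1) by linarith
  moreover have "1 - \<phi> < \<phi>" using ph by linarith
  ultimately have lohi: "lo < hi" using g unfolding lo_def hi_def max_less_iff_conj min_less_iff_conj by simp
  define a where "a = 2/3 * lo + 1/3 * hi"
  define b where "b = 1/3 * lo + 2/3 * hi"
  have lo0: "lo \<ge> 0" "hi \<le> 1" using ph by (auto simp: lo_def hi_def)
  have ab: "0 \<le> a" "a < b" "b \<le> 1" using lohi lo0 unfolding a_def b_def by linarith+
  obtain t :: nat where t: "frac (real r * \<phi> + real t * (real n * \<phi>)) \<in> {a..<b}"
    using exists_hit[OF irr_mult_nat[OF irr] ab, of n "real r * \<phi>"] n by auto
  define d where "d = t * n + r"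
  define u where "u = frac (real d * \<phi>)"
  have "real d * \<phi> = real r * \<phi> + real t * (real n * \<phi>)" by (simp add: d_def algebra_simps)
  then have uab: "u \<in> {a..<b}" using t by (simp add: u_def)
  then have ulh: "lo < u" "u < hi" using lohi unfolding a_def b_def atLeastLessThan_iff by linarith+
  have d1: "d \<ge> 1" using r1 by (simp add: d_def)
  have forb: "d \<in> forbidden \<phi>" unfolding forbidden_def
    using d1 ulh by (auto simp: u_def lo_def hi_def)
  have e: "real d * (\<phi> - 1 / real n) = (u - real r / real n) + of_int (\<lfloor>real d * \<phi>\<rfloor> - int t)"
  proof -
    have "real d / real n = real t + real r / real n" using n by (simp add: d_def field_simps)
    then show ?thesis by (simp add: u_def frac_def algebra_simps)
  qed
  have uh: "u < real r / real n + \<gamma>" using ulh(2) unfolding hi_def by simp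
  have g1: "\<gamma> < 1" using ph unfolding \<gamma>_def by simp
  have b0: "0 \<le> u - real r / real n" using ulh(1) unfolding lo_def by simp
  have b1: "u - real r / real n < 1" using uh g1 by linarith
  have "frac (real d * (\<phi> - 1 / real n)) = frac (u - real r / real n)"
    unfolding e by (rule frac_add_of_int_right)
  also have "\<dots> = u - real r / real n" using b0 b1 by (simp add: frac_eq)
  also have "\<dots> \<le> \<gamma>" using uh by linarith
  finally have "frac (real d * (\<phi> - 1 / real n)) \<le> (1 - \<phi>) / 2" by (simp add: \<gamma>_def)
  then show ?thesis using d1 forb by (auto simp: goodd_def)
qed


lemma K2:
  fixes \<phi> :: real
  assumes irr: "\<phi> \<notin> \<rat>" and ph: "1/2 < \<phi>" "\<phi> < 1"
  shows "\<exists>c2>0. \<exists>N0. \<forall>n\<ge>N0. \<exists>Dn. Dn \<subseteq> {n..<2*n} \<and> (\<forall>d\<in>Dn. goodd \<phi> n d) \<and> c2 * real n \<le> real (card Dn)"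
proof -
  define \<gamma> where "\<gamma> = (1 - \<phi>) / 2"
  define \<eta> where "\<eta> = min \<gamma> (\<phi> - 1/2)"
  have \<eta>: "\<eta> > 0" "\<eta> \<le> \<gamma>" "\<eta> \<le> \<phi> - 1/2"
  proof -
    have "\<gamma> > 0" using ph by (simp add: \<gamma>_def)
    then show "\<eta> > 0" using ph by (simp add: \<eta>_def)
    show "\<eta> \<le> \<gamma>" unfolding \<eta>_def by (rule min.cobounded1)
    show "\<eta> \<le> \<phi> - 1/2" unfolding \<eta>_def by (rule min.cobounded2)
  qed
  have g1: "\<gamma> < 1" using ph by (simp add: \<gamma>_def)
  have ab: "0 \<le> (1/2::real)" "1/2 \<le> 1/2 + \<eta>/2" "1/2 + \<eta>/2 \<le> 1" using \<eta> ph by auto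
  obtain M0 where M0: "\<And>M x. M \<ge> M0 \<Longrightarrow> \<bar>real (cnt \<phi> x (1/2) (1/2 + \<eta>/2) M) - (1/2 + \<eta>/2 - 1/2) * real M\<bar> \<le> \<eta>/4 * real M"
    using equidist_unif[OF irr ab, of "\<eta>/4"] \<eta> by fastforce
  define N0 where "N0 = nat \<lceil>(2 * real M0 + 12) / \<eta>\<rceil>"
  show ?thesis
  proof (intro exI conjI allI impI)
    show "\<eta> * \<eta> / 16 > 0" using \<eta> by simp
    fix n assume nN0: "n \<ge> N0"
    have "(2 * real M0 + 12) / \<eta> \<le> real n" using nN0 unfolding N0_def by linarith
    then have hbig: "2 * real M0 + 12 \<le> real n * \<eta>" using \<eta> by (simp add: field_simps)
    define h where "h = real n * \<eta>"
    have h: "2 * real M0 + 12 \<le> h" using hbig by (simp add: h_def)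
    have n1: "n \<ge> 1"
    proof (rule ccontr)
      assume "\<not> n \<ge> 1" then have "n = 0" by simp
      then show False using h by (simp add: h_def)
    qed
    define A where "A = real n * (1/2 - \<eta>/2)"
    have A0: "A \<ge> 0" using \<eta> ph unfolding A_def by (intro mult_nonneg_nonneg) auto
    have Ah: "A = real n / 2 - h / 2" by (simp add: A_def h_def algebra_simps)
    define j0 where "j0 = nat \<lceil>A\<rceil>"
    have j0: "A \<le> real j0" "real j0 < A + 1"
    proof -
      have "\<lceil>A\<rceil> \<ge> 0" using A0 by simp
      then have "real j0 = of_int \<lceil>A\<rceil>" by (simp add: j0_def)
      then show "A \<le> real j0" "real j0 < A + 1" using ceiling_correct[of A] by linarith+
    qed
    define M where "M = nat (\<lfloor>h / 2\<rfloor> - 1)"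
    have M: "h / 2 - 2 \<le> real M" "real M \<le> h / 2 - 1"
    proof -
      have "\<lfloor>h / 2\<rfloor> \<ge> 2" using h by linarith
      then have "real M = of_int \<lfloor>h / 2\<rfloor> - 1" by (simp add: M_def)
      then show "h / 2 - 2 \<le> real M" "real M \<le> h / 2 - 1" using floor_correct[of "h/2"] by linarith+
    qed
    have MM0: "M \<ge> M0" using M h by linarith
    define J where "J = {t. t < M \<and> frac (real (n + j0) * \<phi> + real t * \<phi>) \<in> {1/2..<1/2 + \<eta>/2}}"
    have cJ: "card J = cnt \<phi> (real (n + j0) * \<phi>) (1/2) (1/2 + \<eta>/2) M"
      unfolding J_def cnt_def by (rule card_as_ind)
    have cntb: "\<bar>real (cnt \<phi> (real (n + j0) * \<phi>) (1/2) (1/2 + \<eta>/2) M) - (\<eta>/2) * real M\<bar> \<le> \<eta>/4 * real M"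
      using M0[OF MM0, of "real (n + j0) * \<phi>"] by simp
    have cardJ: "\<eta> / 4 * real M \<le> real (card J)" using cntb unfolding cJ abs_le_iff by linarith
    define Dn where "Dn = (\<lambda>t. n + j0 + t) ` J"
    have cardD: "card Dn = card J" unfolding Dn_def by (rule card_image) (simp add: inj_on_def)
    show "\<eta> * \<eta> / 16 * real n \<le> real (card Dn)"
    proof -
      have hM: "h / 4 \<le> real M" using M h by linarith
      have "\<eta> * \<eta> / 16 * real n = \<eta> / 4 * (h / 4)" by (simp add: h_def)
      also have "\<dots> \<le> \<eta> / 4 * real M" using \<eta> hM by (intro mult_left_mono) auto
      also have "\<dots> \<le> real (card J)" by (rule cardJ)
      also have "\<dots> = real (card Dn)" using cardD by simp
      finally show ?thesis .
    qed
    have tJ: "real (j0 + t) < real n / 2" "A \<le> real (j0 + t)" if "t \<in> J" for t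
    proof -
      have "t < M" using that by (simp add: J_def)
      then have "real t + 1 \<le> real M" by simp
      then show "real (j0 + t) < real n / 2" using j0 M Ah by simp
      show "A \<le> real (j0 + t)" using j0 by simp
    qed
    show "Dn \<subseteq> {n..<2*n}"
    proof
      fix d assume "d \<in> Dn"
      then obtain t where t: "t \<in> J" and d: "d = n + j0 + t" by (auto simp: Dn_def)
      have "real (j0 + t) < real n" using tJ(1)[OF t] n1 by linarith
      then show "d \<in> {n..<2*n}" using d by simp
    qed
    show "\<forall>d\<in>Dn. goodd \<phi> n d"
    proof
      fix d assume "d \<in> Dn"
      then obtain t where t: "t \<in> J" and d: "d = n + j0 + t" by (auto simp: Dn_def)
      define u where "u = frac (real d * \<phi>)"
      have "real d * \<phi> = real (n + j0) * \<phi> + real t * \<phi>" by (simp add: d algebra_simps)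
      then have u: "1/2 \<le> u" "u < 1/2 + \<eta>/2" using t by (auto simp: J_def u_def)
      have d1: "d \<ge> 1" using n1 d by simp
      have "1 - \<phi> \<le> u" "u \<le> \<phi>" using u \<eta> ph by linarith+
      then have forb: "d \<in> forbidden \<phi>" using d1 by (simp add: forbidden_def u_def)
      define jr where "jr = real (j0 + t) / real n"
      have jr: "jr < 1/2" "1/2 - \<eta>/2 \<le> jr"
      proof -
        have nps: "real n > 0" using n1 by simp
        show "jr < 1/2" using tJ(1)[OF t] nps by (simp add: jr_def field_simps)
        have "real n * (1/2 - \<eta>/2) \<le> real (j0 + t)" using tJ(2)[OF t] by (simp add: A_def)
        then show "1/2 - \<eta>/2 \<le> jr" using nps by (simp add: jr_def field_simps)
      qed
      have e: "real d * (\<phi> - 1 / real n) = (u - jr) + of_int (\<lfloor>real d * \<phi>\<rfloor> - 1)"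
      proof -
        have "real d / real n = 1 + jr" using n1 by (simp add: d jr_def field_simps)
        then have "real d * (\<phi> - 1 / real n) = real d * \<phi> - (1 + jr)" by (simp add: algebra_simps)
        then show ?thesis by (simp add: u_def frac_def algebra_simps)
      qed
      have b0: "0 \<le> u - jr" and b1: "u - jr < \<eta>" using u jr by linarith+
      have "frac (real d * (\<phi> - 1 / real n)) = frac (u - jr)" unfolding e by (rule frac_add_of_int_right)
      also have "\<dots> = u - jr" using b0 b1 \<eta> g1 by (simp add: frac_eq)
      also have "\<dots> \<le> \<gamma>" using b1 \<eta> by linarith
      finally have "frac (real d * (\<phi> - 1 / real n)) \<le> (1 - \<phi>) / 2" by (simp add: \<gamma>_def)
      then show "goodd \<phi> n d" using d1 forb by (simp add: goodd_def)
    qed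
  qed
qed


lemma finite_pos_lower:
  fixes f :: "nat \<Rightarrow> real"
  assumes "\<And>n. n < N \<Longrightarrow> P n \<Longrightarrow> f n > 0"
  shows "\<exists>c>0. \<forall>n<N. P n \<longrightarrow> c \<le> f n"
  using assms
proof (induction N)
  case 0 then show ?case by (intro exI[of _ 1]) auto
next
  case (Suc N)
  obtain c where c: "c > 0" "\<forall>n<N. P n \<longrightarrow> c \<le> f n" using Suc by auto
  show ?case
  proof (cases "P N")
    case True
    have fN: "f N > 0" using Suc.prems True by simp
    show ?thesis
      by (rule exI[of _ "min c (f N)"]) (use c fN in \<open>auto simp: less_Suc_eq\<close>)
  next
    case False
    show ?thesis by (rule exI[of _ c]) (use c False in \<open>auto simp: less_Suc_eq\<close>)
  qed
qed

lemma keyK: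
  fixes \<phi> \<alpha> :: real
  assumes irr: "\<phi> \<notin> \<rat>" and ph: "1/2 < \<phi>" "\<phi> < 1" and al: "1 < \<alpha>" "\<alpha> \<le> 2"
  shows "\<exists>c>0. \<forall>n. n \<ge> 1 \<and> \<phi> - 1 / real n > 0 \<longrightarrow>
           (\<exists>Dn. finite Dn \<and> (\<forall>d\<in>Dn. goodd \<phi> n d) \<and> c / real n \<le> (\<Sum>d\<in>Dn. 1 / real d powr \<alpha>))"
proof -
  obtain c2 N0 where c2: "c2 > 0" and N0: "\<And>n. n \<ge> N0 \<Longrightarrow> \<exists>Dn. Dn \<subseteq> {n..<2*n} \<and> (\<forall>d\<in>Dn. goodd \<phi> n d) \<and> c2 * real n \<le> real (card Dn)"
    using K2[OF irr ph] by blast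
  define dsel where "dsel n = (SOME d. goodd \<phi> n d)" for n
  have dsel: "goodd \<phi> n (dsel n)" if "n \<ge> 1" "\<phi> - 1 / real n > 0" for n
    unfolding dsel_def by (rule someI_ex) (rule K1[OF irr ph that])
  obtain c1 where c1: "c1 > 0" "\<forall>n<N0. (n \<ge> 1 \<and> \<phi> - 1 / real n > 0) \<longrightarrow> c1 \<le> real n / real (dsel n) powr \<alpha>"
  proof -
    have "\<exists>c>0. \<forall>n<N0. (n \<ge> 1 \<and> \<phi> - 1 / real n > 0) \<longrightarrow> c \<le> real n / real (dsel n) powr \<alpha>"
    proof (rule finite_pos_lower)
      fix n assume "n < N0" "n \<ge> 1 \<and> \<phi> - 1 / real n > 0"
      then have "dsel n \<ge> 1" "n \<ge> 1" using dsel by (auto simp: goodd_def)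
      then show "real n / real (dsel n) powr \<alpha> > 0" by simp
    qed
    then show ?thesis using that by blast
  qed
  define c where "c = min c1 (c2 / 2 powr \<alpha>)"
  have c: "c > 0" using c1 c2 by (simp add: c_def)
  show ?thesis
  proof (intro exI[of _ c] conjI allI impI)
    show "c > 0" by (rule c)
    fix n assume n: "n \<ge> 1 \<and> \<phi> - 1 / real n > 0"
    have npos: "real n > 0" and n1: "real n \<ge> 1" using n by auto
    show "\<exists>Dn. finite Dn \<and> (\<forall>d\<in>Dn. goodd \<phi> n d) \<and> c / real n \<le> (\<Sum>d\<in>Dn. 1 / real d powr \<alpha>)"
    proof (cases "n < N0")
      case True
      have g: "goodd \<phi> n (dsel n)" using dsel n by simp
      have "c \<le> real n / real (dsel n) powr \<alpha>" using c1(2) True n by (simp add: c_def min.coboundedI1)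
      then have "c / real n \<le> 1 / real (dsel n) powr \<alpha>" using npos by (simp add: field_simps)
      then show ?thesis using g by (intro exI[of _ "{dsel n}"]) auto
    next
      case False
      then obtain Dn where Dn: "Dn \<subseteq> {n..<2*n}" "\<forall>d\<in>Dn. goodd \<phi> n d" "c2 * real n \<le> real (card Dn)"
        using N0 by (meson not_less)
      have fin: "finite Dn" using Dn(1) finite_subset by blast
      have each: "1 / (2 * real n) powr \<alpha> \<le> 1 / real d powr \<alpha>" if "d \<in> Dn" for d
      proof -
        have "real n \<le> real d" "real d \<le> 2 * real n" using Dn(1) that by auto
        then have "real d powr \<alpha> \<le> (2 * real n) powr \<alpha>" "real d powr \<alpha> > 0" using al npos
          by (auto intro: powr_mono2)
        then show ?thesis by (simp add: frac_le)
      qed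
      have "real (card Dn) * (1 / (2 * real n) powr \<alpha>) = (\<Sum>d\<in>Dn. 1 / (2 * real n) powr \<alpha>)" by simp
      also have "\<dots> \<le> (\<Sum>d\<in>Dn. 1 / real d powr \<alpha>)" by (rule sum_mono) (rule each)
      finally have S: "real (card Dn) / (2 * real n) powr \<alpha> \<le> (\<Sum>d\<in>Dn. 1 / real d powr \<alpha>)" by simp
      have p2: "(2 * real n) powr \<alpha> = 2 powr \<alpha> * real n powr \<alpha>" by (rule powr_mult)
      have nal: "real n powr \<alpha> \<le> real n * real n"
      proof -
        have "real n powr \<alpha> \<le> real n powr 2" using n1 al by (intro powr_mono) auto
        also have "real n powr 2 = real n * real n" using npos by (simp add: powr_realpow power2_eq_square)
        finally show ?thesis .
      qed
      have pa: "2 powr \<alpha> > 0" "real n powr \<alpha> > 0" using npos by auto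
      have "c \<le> c2 / 2 powr \<alpha>" unfolding c_def by (rule min.cobounded2)
      then have "c / real n \<le> (c2 / 2 powr \<alpha>) / real n" using npos by (intro divide_right_mono) auto
      also have "\<dots> = c2 * real n / (2 powr \<alpha> * (real n * real n))" using npos by (simp add: field_simps)
      also have "\<dots> \<le> c2 * real n / (2 powr \<alpha> * real n powr \<alpha>)"
        using nal pa c2 npos by (intro divide_left_mono mult_left_mono mult_pos_pos) auto
      also have "\<dots> \<le> real (card Dn) / (2 powr \<alpha> * real n powr \<alpha>)"
        using Dn(3) pa by (intro divide_right_mono) auto
      also have "\<dots> = real (card Dn) / (2 * real n) powr \<alpha>" by (simp add: p2)
      also have "\<dots> \<le> (\<Sum>d\<in>Dn. 1 / real d powr \<alpha>)" by (rule S)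
      finally show ?thesis using fin Dn(2) by blast
    qed
  qed
qed


lemma two_ones_inj: "n \<ge> 1 \<Longrightarrow> two_ones d = two_ones n \<Longrightarrow> n = d"
proof -
  assume n: "n \<ge> 1" and e: "two_ones d = two_ones n"
  have "two_ones n (int n) = Some 1" by (simp add: two_ones_def)
  then have "two_ones d (int n) = Some 1" using e by simp
  then have "int n = 0 \<or> int n = int d" by (simp add: two_ones_def split: if_splits)
  then show "n = d" using n by auto
qed

lemma two_ones_ne_zeros: "two_ones d \<noteq> zeros_pat m"
proof
  assume "two_ones d = zeros_pat m"
  then have "two_ones d 0 = zeros_pat m 0" by simp
  then show False by (simp add: two_ones_def zeros_pat_def split: if_splits)
qed

lemma H_nonneg: "0 \<le> H_alpha \<phi> m \<alpha> p"
  by (simp add: H_alpha_def)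

lemma H_two_ones:
  assumes d: "d \<in> forbidden \<phi>"
  shows "H_alpha \<phi> m \<alpha> (two_ones d) = 1 / real d powr \<alpha>"
proof -
  have d1: "d \<ge> 1" using d by (simp add: forbidden_def)
  have "(THE n. n \<in> forbidden \<phi> \<and> two_ones d = two_ones n) = d"
  proof (rule the_equality)
    show "d \<in> forbidden \<phi> \<and> two_ones d = two_ones d" using d by simp
    fix n assume "n \<in> forbidden \<phi> \<and> two_ones d = two_ones n"
    then show "n = d" using two_ones_inj[of n d] by (auto simp: forbidden_def)
  qed
  then show ?thesis using d two_ones_ne_zeros[of d m] unfolding H_alpha_def by auto
qed

lemma H_zero_good:
  assumes nz: "no_m_zeros m X" and nf: "no_forbidden_ones \<phi> X"
    and A: "finite A" "A \<noteq> {}"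
  shows "H_alpha \<phi> m \<alpha> (pattern_of X A) = 0"
proof -
  have p0: "pattern_of X A 0 = Some (X (Min A))" using A by (simp add: pattern_of_def)
  have nz': "pattern_of X A \<noteq> zeros_pat m"
  proof
    assume e: "pattern_of X A = zeros_pat m"
    have "\<forall>i<m. X (Min A + int i) = 0"
    proof (intro allI impI)
      fix i assume i: "i < m"
      have "pattern_of X A (int i) = Some 0" using e i by (simp add: zeros_pat_def)
      then show "X (Min A + int i) = 0" by (simp add: pattern_of_def add.commute split: if_splits)
    qed
    then show False using nz unfolding no_m_zeros_def by blast
  qed
  have nt: "\<not> (\<exists>n\<in>forbidden \<phi>. pattern_of X A = two_ones n)"
  proof
    assume "\<exists>n\<in>forbidden \<phi>. pattern_of X A = two_ones n"
    then obtain n where n: "n \<in> forbidden \<phi>" "pattern_of X A = two_ones n" by blast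
    have "pattern_of X A 0 = Some 1" using n(2) by (simp add: two_ones_def)
    then have x1: "X (Min A) = 1" using p0 by simp
    have "pattern_of X A (int n) = Some 1" using n(2) by (simp add: two_ones_def)
    then have x2: "X (Min A + int n) = 1" by (simp add: pattern_of_def add.commute split: if_splits)
    show False using nf n(1) x1 x2 by (auto simp: no_forbidden_ones_def)
  qed
  show ?thesis using nz' nt by (simp add: H_alpha_def)
qed

definition AA :: "nat \<Rightarrow> int set set" where "AA k = {A. A \<subseteq> {- int k..int k} \<and> A \<noteq> {}}"

lemma finite_AA: "finite (AA k)"
proof -
  have "AA k \<subseteq> Pow {- int k..int k}" by (auto simp: AA_def)
  then show ?thesis by (rule finite_subset) simp
qed

lemma seg_AA: "seg_energy \<Phi> Y k = (\<Sum>A\<in>AA k. \<Phi> (pattern_of Y A))"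
  by (simp add: seg_energy_def AA_def)

lemma seg_decomp:
  fixes \<Phi> H :: "pattern \<Rightarrow> real"
  assumes finP: "finite P" and out: "\<And>q. q \<notin> P \<Longrightarrow> \<Phi> q = H q"
  shows "seg_energy \<Phi> Y k = seg_energy H Y k + (\<Sum>p\<in>P. (\<Phi> p - H p) * real (occ Y p k))"
proof -
  define \<delta> where "\<delta> q = \<Phi> q - H q" for q
  have d0: "\<delta> q = 0" if "q \<notin> P" for q using out[OF that] by (simp add: \<delta>_def)
  have pt: "\<delta> q = (\<Sum>p\<in>P. if q = p then \<delta> p else 0)" for q
    using finP d0 by (cases "q \<in> P") (simp_all add: sum.delta)
  have "seg_energy \<Phi> Y k = seg_energy H Y k + (\<Sum>A\<in>AA k. \<delta> (pattern_of Y A))"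
    unfolding seg_AA \<delta>_def by (simp add: sum.distrib[symmetric])
  also have "(\<Sum>A\<in>AA k. \<delta> (pattern_of Y A)) = (\<Sum>A\<in>AA k. \<Sum>p\<in>P. if pattern_of Y A = p then \<delta> p else 0)"
    by (rule sum.cong[OF refl]) (rule pt)
  also have "\<dots> = (\<Sum>p\<in>P. \<Sum>A\<in>AA k. if pattern_of Y A = p then \<delta> p else 0)" by (rule sum.swap)
  also have "\<dots> = (\<Sum>p\<in>P. \<delta> p * real (occ Y p k))"
  proof (rule sum.cong[OF refl])
    fix p
    have "(\<Sum>A\<in>{A\<in>AA k. pattern_of Y A = p}. \<delta> p) = (\<Sum>A\<in>AA k. if pattern_of Y A = p then \<delta> p else 0)"
      by (rule sum.inter_filter[OF finite_AA])
    then have "(\<Sum>A\<in>AA k. if pattern_of Y A = p then \<delta> p else 0) = (\<Sum>A\<in>{A\<in>AA k. pattern_of Y A = p}. \<delta> p)"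
      by simp
    also have "\<dots> = \<delta> p * real (card {A\<in>AA k. pattern_of Y A = p})" by simp
    also have "{A\<in>AA k. pattern_of Y A = p} = {A. A \<subseteq> {- int k..int k} \<and> A \<noteq> {} \<and> pattern_of Y A = p}"
      by (auto simp: AA_def)
    finally show "(\<Sum>A\<in>AA k. if pattern_of Y A = p then \<delta> p else 0) = \<delta> p * real (occ Y p k)"
      by (simp add: occ_def)
  qed
  finally show ?thesis by (simp add: \<delta>_def)
qed

lemma pattern_pair:
  assumes "W t = 1" "W (t + int d) = 1" "d \<ge> 1"
  shows "pattern_of W {t, t + int d} = two_ones d"
proof
  fix i
  have m: "Min {t, t + int d} = t" by simp
  show "pattern_of W {t, t + int d} i = two_ones d i"
    using assms unfolding pattern_of_def m two_ones_def by (auto simp: add.commute)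
qed

lemma seg_pairs:
  assumes fin: "finite Dn" and DF: "Dn \<subseteq> forbidden \<phi>"
  shows "(\<Sum>d\<in>Dn. 1 / real d powr \<alpha> * real (card {t\<in>win k. t + int d \<in> win k \<and> W t = 1 \<and> W (t + int d) = 1}))
         \<le> seg_energy (H_alpha \<phi> m \<alpha>) W k"
proof -
  define Q where "Q d = {t\<in>win k. t + int d \<in> win k \<and> W t = 1 \<and> W (t + int d) = 1}" for d
  define Pairs where "Pairs = Sigma Dn Q"
  define f where "f = (\<lambda>(d::nat, t::int). {t, t + int d})"
  have d1: "d \<ge> 1" if "d \<in> Dn" for d using DF that by (auto simp: forbidden_def)
  have finP: "finite Pairs" unfolding Pairs_def Q_def using fin by (intro finite_SigmaI) auto
  have inj: "inj_on f Pairs"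
  proof (rule inj_onI)
    fix a b assume a: "a \<in> Pairs" and b: "b \<in> Pairs" and e: "f a = f b"
    obtain d t where a': "a = (d, t)" by (cases a)
    obtain d' t' where b': "b = (d', t')" by (cases b)
    have dd: "d \<ge> 1" "d' \<ge> 1" using a b d1 unfolding a' b' Pairs_def by auto
    have e': "{t, t + int d} = {t', t' + int d'}" using e by (simp add: f_def a' b')
    have "Min {t, t + int d} = Min {t', t' + int d'}" using e' by simp
    then have tt: "t = t'" by simp
    have "Max {t, t + int d} = Max {t', t' + int d'}" using e' by simp
    then have "t + int d = t' + int d'" by simp
    then show "a = b" using tt by (simp add: a' b')
  qed
  have sub: "f ` Pairs \<subseteq> AA k"
    by (auto simp: f_def Pairs_def Q_def AA_def win_def)
  have "(\<Sum>d\<in>Dn. 1 / real d powr \<alpha> * real (card (Q d))) = (\<Sum>d\<in>Dn. \<Sum>t\<in>Q d. 1 / real d powr \<alpha>)" by simp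
  also have "\<dots> = (\<Sum>(d, t)\<in>Pairs. 1 / real d powr \<alpha>)" unfolding Pairs_def
    by (rule sum.Sigma) (use fin in \<open>auto simp: Q_def\<close>)
  also have "\<dots> = (\<Sum>(d, t)\<in>Pairs. H_alpha \<phi> m \<alpha> (pattern_of W (f (d, t))))"
  proof (rule sum.cong[OF refl])
    fix x assume x: "x \<in> Pairs"
    obtain d t where x': "x = (d, t)" by (cases x)
    have "d \<in> Dn" "W t = 1" "W (t + int d) = 1" using x unfolding x' Pairs_def Q_def by auto
    then show "(case x of (d, t) \<Rightarrow> 1 / real d powr \<alpha>) = (case x of (d, t) \<Rightarrow> H_alpha \<phi> m \<alpha> (pattern_of W (f (d, t))))"
      unfolding x' f_def using pattern_pair[of W t d] d1 H_two_ones[of d \<phi> m \<alpha>] DF by auto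
  qed
  also have "\<dots> = (\<Sum>A\<in>f ` Pairs. H_alpha \<phi> m \<alpha> (pattern_of W A))"
    using sum.reindex[OF inj, of "\<lambda>A. H_alpha \<phi> m \<alpha> (pattern_of W A)"] by (simp add: case_prod_unfold)
  also have "\<dots> \<le> (\<Sum>A\<in>AA k. H_alpha \<phi> m \<alpha> (pattern_of W A))"
    by (rule sum_mono2[OF finite_AA sub]) (rule H_nonneg)
  also have "\<dots> = seg_energy (H_alpha \<phi> m \<alpha>) W k" by (simp add: seg_AA)
  finally show ?thesis by (simp add: Q_def)
qed


lemma const_over_win: "(\<lambda>k. c / real (2 * k + 1)) \<longlonglongrightarrow> 0"
proof (rule Lim_null_comparison)
  show "\<forall>\<^sub>F k in sequentially. norm (c / real (2 * k + 1)) \<le> \<bar>c\<bar> / real (Suc k)"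
  proof (rule always_eventually, rule allI)
    fix k :: nat
    have "real (Suc k) \<le> real (2 * k + 1)" by simp
    then have "\<bar>c\<bar> / real (2 * k + 1) \<le> \<bar>c\<bar> / real (Suc k)" by (intro divide_left_mono) auto
    then show "norm (c / real (2 * k + 1)) \<le> \<bar>c\<bar> / real (Suc k)" by (simp add: abs_divide)
  qed
  show "(\<lambda>k. \<bar>c\<bar> / real (Suc k)) \<longlonglongrightarrow> 0"
    using LIMSEQ_Suc[OF lim_const_over_n[of "\<bar>c\<bar>"]] by simp
qed

lemma approx_conv:
  fixes f g :: "nat \<Rightarrow> real"
  assumes g: "(\<lambda>k. g k / real (2 * k + 1)) \<longlonglongrightarrow> L" and b: "\<And>k. \<bar>f k - g k\<bar> \<le> K"
  shows "(\<lambda>k. f k / real (2 * k + 1)) \<longlonglongrightarrow> L"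
proof -
  have z: "(\<lambda>k. (f k - g k) / real (2 * k + 1)) \<longlonglongrightarrow> 0"
  proof (rule Lim_null_comparison)
    show "\<forall>\<^sub>F k in sequentially. norm ((f k - g k) / real (2 * k + 1)) \<le> K / real (2 * k + 1)"
      using b by (intro always_eventually allI) (simp add: abs_divide divide_right_mono)
    show "(\<lambda>k. K / real (2 * k + 1)) \<longlonglongrightarrow> 0" by (rule const_over_win)
  qed
  have "(\<lambda>k. g k / real (2 * k + 1) + (f k - g k) / real (2 * k + 1)) \<longlonglongrightarrow> L + 0"
    by (rule tendsto_add[OF g z])
  moreover have "g k / real (2 * k + 1) + (f k - g k) / real (2 * k + 1) = f k / real (2 * k + 1)" for k
    by (simp add: add_divide_distrib[symmetric])
  ultimately show ?thesis by simp
qed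

lemma X_conv:
  fixes \<phi> x A :: real
  assumes irr: "\<phi> \<notin> \<rat>" and v: "valid p"
    and X: "\<And>n. frac (x + of_int n * \<phi>) \<notin> {0, \<phi>} \<Longrightarrow> X n = (if frac (x + of_int n * \<phi>) < \<phi> then 0 else 1)"
    and G: "(\<lambda>k. (\<Sum>t\<in>win k. indr (Sstd p \<phi> (x + of_int t * \<phi>))) / real (2 * k + 1)) \<longlonglongrightarrow> A"
  shows "(\<lambda>k. real (occ X p k) / real (2 * k + 1)) \<longlonglongrightarrow> A"
proof (rule approx_conv[OF G])
  fix k
  have 1: "real (occ X p k) \<le> (\<Sum>t\<in>win k. indr (OccY X p t))"
    "(\<Sum>t\<in>win k. indr (OccY X p t)) \<le> real (occ X p k) + real (Dm p)" by (rule occ_approx[OF v])+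
  have 2: "\<bar>(\<Sum>t\<in>win k. indr (OccY X p t)) - (\<Sum>t\<in>win k. indr (Sstd p \<phi> (x + of_int t * \<phi>)))\<bar> \<le> 2 * real (card (pdom p))"
    by (rule occ_vs_std[OF irr v X])
  show "\<bar>real (occ X p k) - (\<Sum>t\<in>win k. indr (Sstd p \<phi> (x + of_int t * \<phi>)))\<bar> \<le> real (Dm p) + 2 * real (card (pdom p))"
    using 1 2 unfolding abs_le_iff by linarith
qed

lemma W_occ_bound:
  fixes \<phi> x :: real and n :: nat
  assumes irr: "\<phi> - 1 / real n \<notin> \<rat>" and v: "valid p" and n: "n > 0"
    and W: "\<And>j. frac (x + of_int j * (\<phi> - 1 / real n)) \<notin> {0, \<phi> - 1 / real n} \<Longrightarrow>
              W j = (if frac (x + of_int j * (\<phi> - 1 / real n)) < \<phi> - 1 / real n then 0 else 1)"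
  shows "\<bar>real (occ W p k) - (\<Sum>t\<in>win k. indr (Sstd p \<phi> (x + of_int t * (\<phi> - 1 / real n))))\<bar>
          \<le> (\<Sum>t\<in>win k. err p \<phi> n (x + of_int t * (\<phi> - 1 / real n))) + (real (Dm p) + 2 * real (card (pdom p)))"
proof -
  let ?\<psi> = "\<phi> - 1 / real n"
  have 1: "real (occ W p k) \<le> (\<Sum>t\<in>win k. indr (OccY W p t))"
    "(\<Sum>t\<in>win k. indr (OccY W p t)) \<le> real (occ W p k) + real (Dm p)" by (rule occ_approx[OF v])+
  have 2: "\<bar>(\<Sum>t\<in>win k. indr (OccY W p t)) - (\<Sum>t\<in>win k. indr (Sstd p ?\<psi> (x + of_int t * ?\<psi>)))\<bar> \<le> 2 * real (card (pdom p))"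
    by (rule occ_vs_std[OF irr v W])
  have "\<bar>(\<Sum>t\<in>win k. indr (Sstd p ?\<psi> (x + of_int t * ?\<psi>))) - (\<Sum>t\<in>win k. indr (Sstd p \<phi> (x + of_int t * ?\<psi>)))\<bar>
      = \<bar>\<Sum>t\<in>win k. indr (Sstd p ?\<psi> (x + of_int t * ?\<psi>)) - indr (Sstd p \<phi> (x + of_int t * ?\<psi>))\<bar>"
    by (simp add: sum_subtractf)
  also have "\<dots> \<le> (\<Sum>t\<in>win k. \<bar>indr (Sstd p ?\<psi> (x + of_int t * ?\<psi>)) - indr (Sstd p \<phi> (x + of_int t * ?\<psi>))\<bar>)"
    by (rule sum_abs)
  also have "\<dots> \<le> (\<Sum>t\<in>win k. err p \<phi> n (x + of_int t * ?\<psi>))"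
    by (rule sum_mono) (rule sstd_err[OF v n])
  finally have 3: "\<bar>(\<Sum>t\<in>win k. indr (Sstd p ?\<psi> (x + of_int t * ?\<psi>))) - (\<Sum>t\<in>win k. indr (Sstd p \<phi> (x + of_int t * ?\<psi>)))\<bar>
      \<le> (\<Sum>t\<in>win k. err p \<phi> n (x + of_int t * ?\<psi>))" .
  show ?thesis using 1 2 3 unfolding abs_le_iff by linarith
qed

lemma card_shift_le:
  fixes Q :: "int \<Rightarrow> bool"
  shows "card {t\<in>win k. Q t} \<le> card {t\<in>win k. t + int d \<in> win k \<and> Q t} + d"
proof -
  have "{t\<in>win k. Q t} \<subseteq> {t\<in>win k. t + int d \<in> win k \<and> Q t} \<union> {int k - int d + 1 .. int k}"
    by (auto simp: win_def)
  then have "card {t\<in>win k. Q t} \<le> card ({t\<in>win k. t + int d \<in> win k \<and> Q t} \<union> {int k - int d + 1 .. int k})"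
    by (rule card_mono[rotated]) simp
  also have "\<dots> \<le> card {t\<in>win k. t + int d \<in> win k \<and> Q t} + card {int k - int d + 1 .. int k}"
    by (rule card_Un_le)
  finally show ?thesis by simp
qed

lemma Wpair:
  fixes \<psi> x :: real and d :: nat
  assumes \<psi>: "0 < \<psi>" "\<psi> < 1"
    and W: "\<And>j. frac (x + of_int j * \<psi>) \<notin> {0, \<psi>} \<Longrightarrow> W j = (if frac (x + of_int j * \<psi>) < \<psi> then 0 else 1)"
    and e: "frac (real d * \<psi>) \<le> (1 - \<psi>) / 2"
  shows "(\<Sum>t\<in>win k. indr (frac (x + of_int t * \<psi>) \<in> {\<psi> + (1 - \<psi>) / 8..<\<psi> + (1 - \<psi>) / 2})) - real d
         \<le> real (card {t\<in>win k. t + int d \<in> win k \<and> W t = 1 \<and> W (t + int d) = 1})"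
proof -
  define I where "I = {\<psi> + (1 - \<psi>) / 8..<\<psi> + (1 - \<psi>) / 2}"
  define L where "L = (1 - \<psi>) / 2"
  have L: "L > 0" "\<psi> + L + L = 1" using \<psi> by (auto simp: L_def)
  have imp: "W t = 1 \<and> W (t + int d) = 1" if t: "frac (x + of_int t * \<psi>) \<in> I" for t
  proof -
    define u where "u = frac (x + of_int t * \<psi>)"
    have u: "\<psi> < u" "u < \<psi> + L" using t L \<psi> by (auto simp: I_def u_def L_def)
    have "u \<notin> {0, \<psi>}" using u \<psi> by auto
    then have ne: "frac (x + of_int t * \<psi>) \<notin> {0, \<psi>}" unfolding u_def .
    have nl: "\<not> frac (x + of_int t * \<psi>) < \<psi>" using u unfolding u_def by simp
    have W1: "W t = 1" using W[OF ne] nl by simp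
    define v where "v = frac (real d * \<psi>)"
    have v: "0 \<le> v" "v \<le> L" using e by (auto simp: v_def L_def)
    have eq: "x + of_int (t + int d) * \<psi> = (x + of_int t * \<psi>) + real d * \<psi>" by (simp add: algebra_simps)
    have "frac (x + of_int (t + int d) * \<psi>) = frac ((x + of_int t * \<psi>) + real d * \<psi>)"
      by (rule arg_cong[where f=frac]) (rule eq)
    also have "\<dots> = (if u + v < 1 then u + v else u + v - 1)" unfolding u_def v_def by (rule frac_add)
    also have "\<dots> = u + v" using u v L by simp
    finally have f2: "frac (x + of_int (t + int d) * \<psi>) = u + v" .
    have ne2: "frac (x + of_int (t + int d) * \<psi>) \<notin> {0, \<psi>}" unfolding f2 using u v \<psi> by auto
    have nl2: "\<not> frac (x + of_int (t + int d) * \<psi>) < \<psi>" using u v f2 by simp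
    have "W (t + int d) = 1" using W[OF ne2] nl2 by simp
    then show ?thesis using W1 by simp
  qed
  have "(\<Sum>t\<in>win k. indr (frac (x + of_int t * \<psi>) \<in> I)) = real (card {t\<in>win k. frac (x + of_int t * \<psi>) \<in> I})"
    by (rule sum_indr_card) simp
  also have "card {t\<in>win k. frac (x + of_int t * \<psi>) \<in> I} \<le> card {t\<in>win k. t + int d \<in> win k \<and> frac (x + of_int t * \<psi>) \<in> I} + d"
    by (rule card_shift_le)
  also have "card {t\<in>win k. t + int d \<in> win k \<and> frac (x + of_int t * \<psi>) \<in> I} \<le> card {t\<in>win k. t + int d \<in> win k \<and> W t = 1 \<and> W (t + int d) = 1}"
    using imp by (intro card_mono) auto
  finally show ?thesis unfolding I_def by simp
qed


lemma div_aux: "(D::real) \<noteq> 0 \<Longrightarrow> (a * b - c * (e + f)) / D = a * (b / D) - c * (e / D + f / D)"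
  by (simp add: field_simps)

lemma errlim_nonneg: "valid p \<Longrightarrow> n > 0 \<Longrightarrow> 0 \<le> errlim p n"
  unfolding errlim_def valid_def by (intro sum_nonneg) auto

lemma Sp_nonneg: "valid p \<Longrightarrow> 0 \<le> (\<Sum>i\<in>pdom p. (of_int i + 1 :: real))"
  unfolding valid_def by (intro sum_nonneg) auto

theorem theorem4p8:
  fixes \<phi> \<alpha> :: real and m :: nat and X :: "int \<Rightarrow> nat"
  assumes "\<phi> \<notin> \<rat>" and "1/2 < \<phi>" and "\<phi> < 1"
    and "1 < \<alpha>" and "\<alpha> \<le> 2"
    and hm: "\<forall>Y::int \<Rightarrow> nat. (range Y \<subseteq> {0, 1} \<and> no_m_zeros m Y \<and> no_forbidden_ones \<phi> Y)
               \<longleftrightarrow> sturmian \<phi> Y"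
    and "sturmian \<phi> X"
  shows "\<forall>P :: pattern set. finite P \<longrightarrow>
           (\<exists>lam>0. \<forall>\<Phi>'. perturbation lam P (H_alpha \<phi> m \<alpha>) \<Phi>' \<longrightarrow>
              (\<forall>W. (\<exists>n::nat. n \<ge> 1 \<and> \<phi> - 1 / real n > 0 \<and> sturmian (\<phi> - 1 / real n) W) \<longrightarrow>
                   energy_density \<Phi>' X \<le> energy_density \<Phi>' W))"
proof (intro allI impI)
  note irr = assms(1) and ph = assms(2,3) and al = assms(4,5) and sX = assms(7)
  fix P :: "pattern set" assume finP: "finite P"
  define H where "H = H_alpha \<phi> m \<alpha>"
  obtain c where c: "c > 0" and cK: "\<And>n. n \<ge> 1 \<and> \<phi> - 1 / real n > 0 \<Longrightarrow>
      \<exists>Dn. finite Dn \<and> (\<forall>d\<in>Dn. goodd \<phi> n d) \<and> c / real n \<le> (\<Sum>d\<in>Dn. 1 / real d powr \<alpha>)"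
    using keyK[OF irr ph al] by blast
  define Af where "Af p = (SOME A. \<forall>\<beta> x. \<beta> \<notin> \<rat> \<longrightarrow>
      (\<lambda>k. (\<Sum>t\<in>win k. indr (Sstd p \<phi> (x + of_int t * \<beta>))) / real (2 * k + 1)) \<longlonglongrightarrow> A)" for p
  have Af: "(\<lambda>k. (\<Sum>t\<in>win k. indr (Sstd p \<phi> (x + of_int t * \<beta>))) / real (2 * k + 1)) \<longlonglongrightarrow> Af p"
    if "valid p" "\<beta> \<notin> \<rat>" for p \<beta> x
  proof -
    have "\<forall>\<beta> x. \<beta> \<notin> \<rat> \<longrightarrow> (\<lambda>k. (\<Sum>t\<in>win k. indr (Sstd p \<phi> (x + of_int t * \<beta>))) / real (2 * k + 1)) \<longlonglongrightarrow> Af p"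
      unfolding Af_def by (rule someI_ex) (rule sstd_freq[OF that(1) irr])
    then show ?thesis using that(2) by blast
  qed
  define Sp where "Sp p = (\<Sum>i\<in>pdom p. (of_int i + 1 :: real))" for p
  define KP where "KP = (\<Sum>p\<in>P. if valid p then 6 * Sp p else 0)"
  have KP0: "KP \<ge> 0" unfolding KP_def Sp_def using Sp_nonneg by (intro sum_nonneg) auto
  define L0 where "L0 = 3 * (1 - \<phi>) / 8"
  have L0: "L0 > 0" using ph by (simp add: L0_def)
  define lam where "lam = L0 * c / (KP + 1)"
  have lam: "lam > 0" using L0 c KP0 by (simp add: lam_def)
  have lamKP: "lam * KP \<le> L0 * c"
  proof -
    have "lam * (KP + 1) = L0 * c" using KP0 by (simp add: lam_def)
    then show ?thesis using lam by (simp add: algebra_simps)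
  qed
  show "\<exists>lam>0. \<forall>\<Phi>'. perturbation lam P (H_alpha \<phi> m \<alpha>) \<Phi>' \<longrightarrow>
              (\<forall>W. (\<exists>n::nat. n \<ge> 1 \<and> \<phi> - 1 / real n > 0 \<and> sturmian (\<phi> - 1 / real n) W) \<longrightarrow>
                   energy_density \<Phi>' X \<le> energy_density \<Phi>' W)"
  proof (intro exI[of _ lam] conjI allI impI)
    show "lam > 0" by (rule lam)
    fix \<Phi>' assume pert: "perturbation lam P (H_alpha \<phi> m \<alpha>) \<Phi>'"
    fix W assume "\<exists>n::nat. n \<ge> 1 \<and> \<phi> - 1 / real n > 0 \<and> sturmian (\<phi> - 1 / real n) W"
    then obtain n :: nat where n: "n \<ge> 1" "\<phi> - 1 / real n > 0" and sW: "sturmian (\<phi> - 1 / real n) W" by blast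
    define \<delta> where "\<delta> p = \<Phi>' p - H p" for p
    have \<delta>b: "\<bar>\<delta> p\<bar> < lam" if "p \<in> P" for p using pert that by (auto simp: perturbation_def \<delta>_def H_def)
    have out: "\<Phi>' q = H q" if "q \<notin> P" for q using pert that by (auto simp: perturbation_def H_def)
    have npos: "n > 0" using n by simp
    obtain x where xX: "\<And>j. frac (x + of_int j * \<phi>) \<notin> {0, \<phi>} \<Longrightarrow> X j = (if frac (x + of_int j * \<phi>) < \<phi> then 0 else 1)"
      using sturm_std[OF sX] by blast
    have goodX: "no_m_zeros m X" "no_forbidden_ones \<phi> X" using hm sX by blast+
    have segX: "seg_energy \<Phi>' X k = (\<Sum>p\<in>P. \<delta> p * real (occ X p k))" for k
    proof -
      have "seg_energy H X k = 0"
        unfolding seg_AA H_def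
        by (rule sum.neutral) (auto simp: AA_def intro!: H_zero_good[OF goodX] intro: finite_subset)
      then show ?thesis using seg_decomp[OF finP out, where Y=X and k=k] by (simp add: \<delta>_def)
    qed
    define LX where "LX p = (if valid p then Af p else 0)" for p
    have convX: "(\<lambda>k. seg_energy \<Phi>' X k / real (2 * k + 1)) \<longlonglongrightarrow> (\<Sum>p\<in>P. \<delta> p * LX p)"
    proof -
      have "(\<lambda>k. \<Sum>p\<in>P. \<delta> p * (real (occ X p k) / real (2 * k + 1))) \<longlonglongrightarrow> (\<Sum>p\<in>P. \<delta> p * LX p)"
      proof (intro tendsto_sum tendsto_mult_left)
        fix p assume "p \<in> P"
        show "(\<lambda>k. real (occ X p k) / real (2 * k + 1)) \<longlonglongrightarrow> LX p"
        proof (cases "valid p")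
          case True
          then show ?thesis unfolding LX_def using X_conv[OF irr True xX Af[OF True irr]] by simp
        next
          case False
          then show ?thesis unfolding LX_def by (simp add: occ_invalid)
        qed
      qed
      moreover have "(\<Sum>p\<in>P. \<delta> p * (real (occ X p k) / real (2 * k + 1))) = seg_energy \<Phi>' X k / real (2 * k + 1)" for k
        unfolding segX by (simp add: sum_divide_distrib)
      ultimately show ?thesis by simp
    qed
    have r2: "real (2 * k + 1) = 2 * real k + 1" for k by simp
    have convX0: "(\<lambda>k. seg_energy \<Phi>' X k / (2 * real k + 1)) \<longlonglongrightarrow> (\<Sum>p\<in>P. \<delta> p * LX p)"
      using convX by (simp add: add.commute)
    have convX': "(\<lambda>k. ereal (seg_energy \<Phi>' X k / (2 * real k + 1))) \<longlonglongrightarrow> ereal (\<Sum>p\<in>P. \<delta> p * LX p)"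
      using convX0 by (rule tendsto_ereal)
    have EX: "energy_density \<Phi>' X = ereal (\<Sum>p\<in>P. \<delta> p * LX p)"
      unfolding energy_density_def by (rule lim_imp_Liminf[OF _ convX']) simp
    define \<psi> where "\<psi> = \<phi> - 1 / real n"
    have inpos: "1 / real n > 0" using npos by simp
    have \<psi>: "0 < \<psi>" "\<psi> < 1" "\<psi> < \<phi>" using n(2) ph inpos unfolding \<psi>_def by linarith+
    have irr\<psi>: "\<psi> \<notin> \<rat>"
    proof
      assume "\<psi> \<in> \<rat>"
      then have "\<psi> + 1 / real n \<in> \<rat>" by simp
      then show False using irr by (simp add: \<psi>_def)
    qed
    obtain x' where xW: "\<And>j. frac (x' + of_int j * \<psi>) \<notin> {0, \<psi>} \<Longrightarrow> W j = (if frac (x' + of_int j * \<psi>) < \<psi> then 0 else 1)"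
      using sturm_std[OF sW[folded \<psi>_def]] by blast
    obtain Dn where Dn: "finite Dn" "\<forall>d\<in>Dn. goodd \<phi> n d" "c / real n \<le> (\<Sum>d\<in>Dn. 1 / real d powr \<alpha>)"
      using cK[OF conjI[OF n]] by blast
    define Ik where "Ik k = (\<Sum>t\<in>win k. indr (frac (x' + of_int t * \<psi>) \<in> {\<psi> + (1 - \<psi>) / 8..<\<psi> + (1 - \<psi>) / 2}))" for k
    have IkC: "(\<lambda>k. Ik k / real (2 * k + 1)) \<longlonglongrightarrow> (\<psi> + (1 - \<psi>) / 2) - (\<psi> + (1 - \<psi>) / 8)"
      unfolding Ik_def by (rule freq_interval[OF irr\<psi>]) (use \<psi> in \<open>auto simp: field_simps\<close>)
    define GW where "GW p k = (\<Sum>t\<in>win k. indr (Sstd p \<phi> (x' + of_int t * \<psi>)))" for p k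
    define EW where "EW p k = (\<Sum>t\<in>win k. err p \<phi> n (x' + of_int t * \<psi>))" for p k
    define Kp where "Kp p = real (Dm p) + 2 * real (card (pdom p))" for p
    define lowp where "lowp p k = (if valid p then \<delta> p * GW p k - \<bar>\<delta> p\<bar> * (EW p k + Kp p) else 0)" for p k
    define lowH where "lowH k = (\<Sum>d\<in>Dn. 1 / real d powr \<alpha> * (Ik k - real d))" for k
    have segW: "lowH k + (\<Sum>p\<in>P. lowp p k) \<le> seg_energy \<Phi>' W k" for k
    proof -
      have DF: "Dn \<subseteq> forbidden \<phi>" using Dn(2) by (auto simp: goodd_def)
      have "lowH k \<le> (\<Sum>d\<in>Dn. 1 / real d powr \<alpha> * real (card {t\<in>win k. t + int d \<in> win k \<and> W t = 1 \<and> W (t + int d) = 1}))"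
        unfolding lowH_def
      proof (rule sum_mono)
        fix d assume d: "d \<in> Dn"
        have e: "frac (real d * \<psi>) \<le> (1 - \<psi>) / 2"
        proof -
          have "frac (real d * \<psi>) \<le> (1 - \<phi>) / 2" using Dn(2) d by (simp add: goodd_def \<psi>_def)
          also have "\<dots> \<le> (1 - \<psi>) / 2" using \<psi> by simp
          finally show ?thesis .
        qed
        have "Ik k - real d \<le> real (card {t\<in>win k. t + int d \<in> win k \<and> W t = 1 \<and> W (t + int d) = 1})"
          unfolding Ik_def by (rule Wpair[OF \<psi>(1,2) xW e])
        then show "1 / real d powr \<alpha> * (Ik k - real d) \<le> 1 / real d powr \<alpha> * real (card {t\<in>win k. t + int d \<in> win k \<and> W t = 1 \<and> W (t + int d) = 1})"
          by (intro mult_left_mono) auto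
      qed
      also have "\<dots> \<le> seg_energy H W k" unfolding H_def by (rule seg_pairs[OF Dn(1) DF])
      finally have 1: "lowH k \<le> seg_energy H W k" .
      have 2: "lowp p k \<le> \<delta> p * real (occ W p k)" if "p \<in> P" for p
      proof (cases "valid p")
        case True
        have b: "\<bar>real (occ W p k) - GW p k\<bar> \<le> EW p k + Kp p"
          unfolding GW_def EW_def Kp_def \<psi>_def
          by (rule W_occ_bound[OF irr\<psi>[unfolded \<psi>_def] True npos xW[unfolded \<psi>_def]])
        have "\<delta> p * GW p k - \<delta> p * real (occ W p k) \<le> \<bar>\<delta> p * (GW p k - real (occ W p k))\<bar>"
          by (simp add: algebra_simps)
        also have "\<dots> = \<bar>\<delta> p\<bar> * \<bar>real (occ W p k) - GW p k\<bar>" by (simp add: abs_mult abs_minus_commute)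
        also have "\<dots> \<le> \<bar>\<delta> p\<bar> * (EW p k + Kp p)" using b by (intro mult_left_mono) auto
        finally show ?thesis using True by (simp add: lowp_def)
      next
        case False then show ?thesis by (simp add: lowp_def occ_invalid)
      qed
      have "seg_energy \<Phi>' W k = seg_energy H W k + (\<Sum>p\<in>P. \<delta> p * real (occ W p k))"
        using seg_decomp[OF finP out, where Y=W and k=k] by (simp add: \<delta>_def)
      moreover have "(\<Sum>p\<in>P. lowp p k) \<le> (\<Sum>p\<in>P. \<delta> p * real (occ W p k))" by (rule sum_mono) (rule 2)
      ultimately show ?thesis using 1 by linarith
    qed
    define U where "U = (\<Sum>d\<in>Dn. 1 / real d powr \<alpha> * (3 * (1 - \<psi>) / 8)) +
        (\<Sum>p\<in>P. if valid p then \<delta> p * Af p - \<bar>\<delta> p\<bar> * errlim p n else 0)"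
    have convW: "(\<lambda>k. (lowH k + (\<Sum>p\<in>P. lowp p k)) / real (2 * k + 1)) \<longlonglongrightarrow> U"
    proof -
      have h1: "(\<lambda>k. \<Sum>d\<in>Dn. 1 / real d powr \<alpha> * (Ik k / real (2 * k + 1) - real d / real (2 * k + 1)))
          \<longlonglongrightarrow> (\<Sum>d\<in>Dn. 1 / real d powr \<alpha> * (3 * (1 - \<psi>) / 8 - 0))"
      proof (intro tendsto_sum tendsto_mult_left tendsto_diff const_over_win)
        fix d
        have "(\<psi> + (1 - \<psi>) / 2) - (\<psi> + (1 - \<psi>) / 8) = 3 * (1 - \<psi>) / 8" by (simp add: field_simps)
        then show "(\<lambda>k. Ik k / real (2 * k + 1)) \<longlonglongrightarrow> 3 * (1 - \<psi>) / 8" using IkC by simp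
      qed
      have h2: "(\<lambda>k. \<Sum>p\<in>P. lowp p k / real (2 * k + 1)) \<longlonglongrightarrow> (\<Sum>p\<in>P. if valid p then \<delta> p * Af p - \<bar>\<delta> p\<bar> * errlim p n else 0)"
      proof (intro tendsto_sum)
        fix p assume "p \<in> P"
        show "(\<lambda>k. lowp p k / real (2 * k + 1)) \<longlonglongrightarrow> (if valid p then \<delta> p * Af p - \<bar>\<delta> p\<bar> * errlim p n else 0)"
        proof (cases "valid p")
          case True
          have g: "(\<lambda>k. GW p k / real (2 * k + 1)) \<longlonglongrightarrow> Af p" unfolding GW_def by (rule Af[OF True irr\<psi>])
          have e: "(\<lambda>k. EW p k / real (2 * k + 1)) \<longlonglongrightarrow> errlim p n" unfolding EW_def by (rule freq_err[OF irr\<psi> True npos])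
          have "(\<lambda>k. \<delta> p * (GW p k / real (2 * k + 1)) - \<bar>\<delta> p\<bar> * (EW p k / real (2 * k + 1) + Kp p / real (2 * k + 1)))
              \<longlonglongrightarrow> \<delta> p * Af p - \<bar>\<delta> p\<bar> * (errlim p n + 0)"
            by (intro tendsto_diff tendsto_mult_left tendsto_add g e const_over_win)
          moreover have "\<delta> p * (GW p k / real (2 * k + 1)) - \<bar>\<delta> p\<bar> * (EW p k / real (2 * k + 1) + Kp p / real (2 * k + 1))
              = lowp p k / real (2 * k + 1)" for k
            using True div_aux[of "real (2 * k + 1)" "\<delta> p" "GW p k" "\<bar>\<delta> p\<bar>" "EW p k" "Kp p"]
            by (simp add: lowp_def)
          ultimately show ?thesis using True by simp
        next
          case False then show ?thesis by (simp add: lowp_def)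
        qed
      qed
      have "(\<lambda>k. (\<Sum>d\<in>Dn. 1 / real d powr \<alpha> * (Ik k / real (2 * k + 1) - real d / real (2 * k + 1))) + (\<Sum>p\<in>P. lowp p k / real (2 * k + 1)))
          \<longlonglongrightarrow> (\<Sum>d\<in>Dn. 1 / real d powr \<alpha> * (3 * (1 - \<psi>) / 8 - 0)) + (\<Sum>p\<in>P. if valid p then \<delta> p * Af p - \<bar>\<delta> p\<bar> * errlim p n else 0)"
        by (rule tendsto_add[OF h1 h2])
      moreover have "(\<Sum>d\<in>Dn. 1 / real d powr \<alpha> * (Ik k / real (2 * k + 1) - real d / real (2 * k + 1))) + (\<Sum>p\<in>P. lowp p k / real (2 * k + 1))
          = (lowH k + (\<Sum>p\<in>P. lowp p k)) / real (2 * k + 1)" for k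
        unfolding lowH_def by (simp add: add_divide_distrib sum_divide_distrib diff_divide_distrib[symmetric] mult.assoc)
      ultimately show ?thesis unfolding U_def by simp
    qed
    have UV: "(\<Sum>p\<in>P. \<delta> p * LX p) \<le> U"
    proof -
      define E where "E = (\<Sum>p\<in>P. if valid p then \<bar>\<delta> p\<bar> * errlim p n else 0)"
      have s2: "(\<Sum>p\<in>P. if valid p then \<delta> p * Af p - \<bar>\<delta> p\<bar> * errlim p n else 0) = (\<Sum>p\<in>P. \<delta> p * LX p) - E"
        unfolding E_def LX_def by (simp add: sum_subtractf[symmetric] if_distrib cong: if_cong)
      have Eb: "E \<le> lam * KP / real n"
      proof -
        have "E \<le> (\<Sum>p\<in>P. if valid p then lam * (6 * Sp p / real n) else 0)"
          unfolding E_def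
        proof (rule sum_mono)
          fix p assume p: "p \<in> P"
          show "(if valid p then \<bar>\<delta> p\<bar> * errlim p n else 0) \<le> (if valid p then lam * (6 * Sp p / real n) else 0)"
          proof (cases "valid p")
            case True
            have "\<bar>\<delta> p\<bar> * errlim p n \<le> lam * errlim p n"
              using \<delta>b[OF p] errlim_nonneg[OF True npos] by (intro mult_right_mono) auto
            also have "\<dots> \<le> lam * (6 * Sp p / real n)"
              using errlim_le[OF True npos] lam unfolding Sp_def by (intro mult_left_mono) auto
            finally show ?thesis using True by simp
          qed simp
        qed
        also have "\<dots> = (\<Sum>p\<in>P. lam / real n * (if valid p then 6 * Sp p else 0))"
          by (rule sum.cong) auto
        also have "\<dots> = lam / real n * KP" unfolding KP_def by (rule sum_distrib_left[symmetric])
        also have "\<dots> = lam * KP / real n" by simp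
        finally show ?thesis .
      qed
      have Fb: "L0 * c / real n \<le> (\<Sum>d\<in>Dn. 1 / real d powr \<alpha> * (3 * (1 - \<psi>) / 8))"
      proof -
        have "L0 * c / real n = (c / real n) * L0" by simp
        also have "\<dots> \<le> (\<Sum>d\<in>Dn. 1 / real d powr \<alpha>) * (3 * (1 - \<psi>) / 8)"
        proof (rule mult_mono)
          show "c / real n \<le> (\<Sum>d\<in>Dn. 1 / real d powr \<alpha>)" by (rule Dn(3))
          show "L0 \<le> 3 * (1 - \<psi>) / 8" using \<psi> by (simp add: L0_def)
          show "0 \<le> (\<Sum>d\<in>Dn. 1 / real d powr \<alpha>)" by (intro sum_nonneg) simp
          show "0 \<le> L0" using L0 by simp
        qed
        also have "\<dots> = (\<Sum>d\<in>Dn. 1 / real d powr \<alpha> * (3 * (1 - \<psi>) / 8))" by (rule sum_distrib_right)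
        finally show ?thesis .
      qed
      have "lam * KP / real n \<le> L0 * c / real n" using lamKP npos by (intro divide_right_mono) auto
      then have "E \<le> (\<Sum>d\<in>Dn. 1 / real d powr \<alpha> * (3 * (1 - \<psi>) / 8))" using Eb Fb by linarith
      then show ?thesis unfolding U_def s2 by linarith
    qed
    have "energy_density \<Phi>' X = ereal (\<Sum>p\<in>P. \<delta> p * LX p)" by (rule EX)
    also have "\<dots> \<le> ereal U" using UV by simp
    also have "ereal U = Liminf sequentially (\<lambda>k. ereal ((lowH k + (\<Sum>p\<in>P. lowp p k)) / real (2 * k + 1)))"
    proof -
      have convW': "(\<lambda>k. ereal ((lowH k + (\<Sum>p\<in>P. lowp p k)) / real (2 * k + 1))) \<longlonglongrightarrow> ereal U"
        using convW by (rule tendsto_ereal)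
      have "Liminf sequentially (\<lambda>k. ereal ((lowH k + (\<Sum>p\<in>P. lowp p k)) / real (2 * k + 1))) = ereal U"
        by (rule lim_imp_Liminf[OF _ convW']) simp
      then show ?thesis by simp
    qed
    also have "\<dots> \<le> energy_density \<Phi>' W"
      unfolding energy_density_def
    proof (rule Liminf_mono, rule always_eventually, rule allI)
      fix k
      show "ereal ((lowH k + (\<Sum>p\<in>P. lowp p k)) / real (2 * k + 1)) \<le> ereal (seg_energy \<Phi>' W k / (2 * real k + 1))"
      proof -
        have "(lowH k + (\<Sum>p\<in>P. lowp p k)) / real (2 * k + 1) \<le> seg_energy \<Phi>' W k / real (2 * k + 1)"
          using segW[of k] by (intro divide_right_mono) auto
        moreover have "real (2 * k + 1) = 2 * real k + 1" by simp
        ultimately show ?thesis by (simp add: add.commute)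
      qed
    qed
    finally show "energy_density \<Phi>' X \<le> energy_density \<Phi>' W" .
  qed
qed


end
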